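(* Let $\pi$ be a probability distribution on a measurable space $(\mathcal{X},\mathcal{B}(\mathcal{X}))$ with density $\pi(x)=\tilde{\pi}(x)/Z$ with respect to a dominating measure $\mu$, where $Z=\int_{\mathcal{X}}\tilde{\pi}(x)\mu(dx)\in(0,\infty)$. Let $q_1,\dots,q_K$ be probability densities on $\mathcal{X}$ with respect to $\mu$, and suppose there are positive constants $C_-$ and $C_+$ such that for every $i\in\{1,\dots,K\}$, $\inf_{x\in\mathcal{X}}q_i(x)\geq C_->0$ and $\sup_{x\in\mathcal{X}}q_i(x)\leq C_+<\infty$. Let $\alpha$ be any probability distribution on $\{1,\dots,K\}$, write $\alpha_k=\alpha(k)$, and let $N\geq 1$. Let $(X_n,L_n)$, $n=1,\dots,N$, be i.i.d. with $L_n\sim\alpha$ and $X_n\mid L_n\sim q_{L_n}$, and define $$\widehat{Z}_{BH}=\sum_{n=1}^{N}\frac{\tilde{\pi}(X_n)}{\sum_{m=1}^{N}q_{L_m}(X_n)},\qquad \widehat{Z}_{RB}=\frac{1}{N}\sum_{n=1}^{N}\frac{\tilde{\pi}(X_n)}{\sum_{k=1}^{K}\alpha(k)q_k(X_n)}.$$ Then $$-\frac{\tilde{C}_-}{N}\leq \operatorname{var}\left(\widehat{Z}_{BH}/Z\right)-\operatorname{var}\left(\widehat{Z}_{RB}/Z\right)\leq\frac{\tilde{C}_+}{N^2}$$ for some constants $\tilde{C}_-,\tilde{C}_+>0$.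
   Context: $\widehat{Z}_{BH}$ is the balance heuristic multiple importance sampling estimator of $Z$ with proposal labels drawn at random from $\alpha$, and $\widehat{Z}_{RB}$ is the Rao-Blackwellized importance sampling estimator using the mixture $\sum_k\alpha(k)q_k$ as proposal. *)

theory Defs
  imports "HOL-Probability.Probability"
begin

text \<open>Law of one pair (X,L): L ~ alpha on {1..K}, X | L ~ q_L (density w.r.t. the
  dominating measure M = mu).  Joint density alpha(l) q_l(x) w.r.t. mu x counting measure.\<close>
definition pair_law :: "'a measure \<Rightarrow> (nat \<Rightarrow> 'a \<Rightarrow> real) \<Rightarrow> (nat \<Rightarrow> real) \<Rightarrow> nat \<Rightarrow> ('a \<times> nat) measure" where
  "pair_law M q \<alpha> K = density (M \<Otimes>\<^sub>M count_space {1..K}) (\<lambda>(x, l). ennreal (\<alpha> l * q l x))"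

definition sample_law :: "'a measure \<Rightarrow> (nat \<Rightarrow> 'a \<Rightarrow> real) \<Rightarrow> (nat \<Rightarrow> real) \<Rightarrow> nat \<Rightarrow> nat \<Rightarrow> (nat \<Rightarrow> 'a \<times> nat) measure" where
  "sample_law M q \<alpha> K N = (\<Pi>\<^sub>M n\<in>{1..N}. pair_law M q \<alpha> K)"

definition Z_BH :: "('a \<Rightarrow> real) \<Rightarrow> (nat \<Rightarrow> 'a \<Rightarrow> real) \<Rightarrow> nat \<Rightarrow> (nat \<Rightarrow> 'a \<times> nat) \<Rightarrow> real" where
  "Z_BH pt q N \<omega> = (\<Sum>n\<in>{1..N}. pt (fst (\<omega> n)) / (\<Sum>m\<in>{1..N}. q (snd (\<omega> m)) (fst (\<omega> n))))"

definition Z_RB :: "('a \<Rightarrow> real) \<Rightarrow> (nat \<Rightarrow> 'a \<Rightarrow> real) \<Rightarrow> (nat \<Rightarrow> real) \<Rightarrow> nat \<Rightarrow> nat \<Rightarrow> (nat \<Rightarrow> 'a \<times> nat) \<Rightarrow> real" where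
  "Z_RB pt q \<alpha> K N \<omega> = (1 / real N) * (\<Sum>n\<in>{1..N}. pt (fst (\<omega> n)) / (\<Sum>k\<in>{1..K}. \<alpha> k * q k (fst (\<omega> n))))"

definition variance_of :: "'b measure \<Rightarrow> ('b \<Rightarrow> real) \<Rightarrow> real" where
  "variance_of P f = (\<integral>\<omega>. (f \<omega> - (\<integral>\<omega>'. f \<omega>' \<partial>P))\<^sup>2 \<partial>P)"

end

theory Submission
  imports Defs
begin


declare One_nat_def[simp del]

lemma var_nonneg: "0 \<le> variance_of P f"
  unfolding variance_of_def by (rule integral_nonneg_AE) simp

lemma VAR_fin:
  fixes f :: "'b \<Rightarrow> real"
  assumes P: "prob_space P" and fm: "f \<in> borel_measurable P" and fn: "\<And>w. w \<in> space P \<Longrightarrow> 0 \<le> f w"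
    and e1: "(\<integral>\<^sup>+w. ennreal (f w) \<partial>P) = ennreal m" and e2: "(\<integral>\<^sup>+w. ennreal ((f w)\<^sup>2) \<partial>P) = ennreal s2"
    and m0: "0 \<le> m" and s0: "0 \<le> s2" and Z: "0 < Z"
  shows "variance_of P (\<lambda>w. f w / Z) = (s2 - m\<^sup>2) / Z\<^sup>2"
proof -
  interpret prob_space P by (rule P)
  have i1: "integrable P f"
    using e1 by (intro integrableI_nonneg fm AE_I2 fn) auto
  have i2: "integrable P (\<lambda>w. (f w)\<^sup>2)"
    using e2 by (intro integrableI_nonneg AE_I2) (use fm in auto)
  have E1: "(\<integral>w. f w \<partial>P) = m"
    using integral_eq_nn_integral[OF fm AE_I2[OF fn]] e1 m0 by simp
  have E2: "(\<integral>w. (f w)\<^sup>2 \<partial>P) = s2"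
    using integral_eq_nn_integral[of "\<lambda>w. (f w)\<^sup>2" P] e2 s0 fm by simp
  have Eg: "(\<integral>w. f w / Z \<partial>P) = m / Z" using E1 by simp
  have "variance_of P (\<lambda>w. f w / Z) = (\<integral>w. (f w)\<^sup>2 / Z\<^sup>2 - (2 * m / Z\<^sup>2) * f w + (m / Z)\<^sup>2 \<partial>P)"
    unfolding variance_of_def Eg
  proof (rule Bochner_Integration.integral_cong[OF refl])
    fix w
    have "(f w / Z - m / Z)\<^sup>2 = (f w)\<^sup>2 / Z\<^sup>2 - (2 * m / Z\<^sup>2) * f w + (m / Z)\<^sup>2"
      using Z by (simp add: power2_eq_square field_simps)
    then show "(f w / Z - m / Z)\<^sup>2 = (f w)\<^sup>2 / Z\<^sup>2 - (2 * m / Z\<^sup>2) * f w + (m / Z)\<^sup>2" .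
  qed
  also have "\<dots> = (\<integral>w. (f w)\<^sup>2 / Z\<^sup>2 \<partial>P) - (2 * m / Z\<^sup>2) * (\<integral>w. f w \<partial>P) + (m / Z)\<^sup>2"
    using i1 i2 prob_space by (simp add: Bochner_Integration.integral_add Bochner_Integration.integral_diff)
  also have "\<dots> = (s2 - m\<^sup>2) / Z\<^sup>2"
    using E1 E2 Z by (simp add: field_simps power2_eq_square)
  finally show ?thesis .
qed

lemma VAR_inf:
  fixes f :: "'b \<Rightarrow> real"
  assumes P: "prob_space P" and fm: "f \<in> borel_measurable P"
    and e2: "(\<integral>\<^sup>+w. ennreal ((f w)\<^sup>2) \<partial>P) = \<infinity>" and Z: "0 < Z"
  shows "variance_of P (\<lambda>w. f w / Z) = 0"
proof -
  interpret prob_space P by (rule P)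
  define e where "e = (\<integral>w. f w / Z \<partial>P)"
  have "\<not> integrable P (\<lambda>w. (f w / Z - e)\<^sup>2)"
  proof
    assume i: "integrable P (\<lambda>w. (f w / Z - e)\<^sup>2)"
    have "integrable P (\<lambda>w. 2 * Z\<^sup>2 * (f w / Z - e)\<^sup>2 + 2 * Z\<^sup>2 * e\<^sup>2)"
      using i by simp
    then have i2: "integrable P (\<lambda>w. (f w)\<^sup>2)"
    proof (rule Bochner_Integration.integrable_bound)
      show "(\<lambda>w. (f w)\<^sup>2) \<in> borel_measurable P" using fm by simp
      show "AE w in P. norm ((f w)\<^sup>2) \<le> norm (2 * Z\<^sup>2 * (f w / Z - e)\<^sup>2 + 2 * Z\<^sup>2 * e\<^sup>2)"
      proof (rule AE_I2)
        fix w
        have fw: "f w = Z * (f w / Z - e) + Z * e" using Z by (simp add: field_simps)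
        define A where "A = Z * (f w / Z - e)"
        define B where "B = Z * e"
        have fw': "f w = A + B" unfolding A_def B_def by (rule fw)
        have sq: "(A + B)\<^sup>2 = 2 * A\<^sup>2 + 2 * B\<^sup>2 - (A - B)\<^sup>2" by (simp add: power2_eq_square algebra_simps)
        have "0 \<le> (A - B)\<^sup>2" by simp
        then have "(f w)\<^sup>2 \<le> 2 * A\<^sup>2 + 2 * B\<^sup>2" unfolding fw' sq by linarith
        then have "(f w)\<^sup>2 \<le> 2 * (Z * (f w / Z - e))\<^sup>2 + 2 * (Z * e)\<^sup>2" unfolding A_def B_def .
        then show "norm ((f w)\<^sup>2) \<le> norm (2 * Z\<^sup>2 * (f w / Z - e)\<^sup>2 + 2 * Z\<^sup>2 * e\<^sup>2)"
          by (simp add: power_mult_distrib)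
      qed
    qed
    have "(\<integral>\<^sup>+w. ennreal ((f w)\<^sup>2) \<partial>P) = ennreal (\<integral>w. (f w)\<^sup>2 \<partial>P)"
      by (rule nn_integral_eq_integral[OF i2]) simp
    with e2 show False by simp
  qed
  then show ?thesis unfolding variance_of_def e_def by (rule not_integrable_integral_eq)
qed


locale setting =
  fixes M :: "'a measure" and pt :: "'a \<Rightarrow> real" and q :: "nat \<Rightarrow> 'a \<Rightarrow> real"
    and \<alpha> :: "nat \<Rightarrow> real" and K :: nat and Cm Cp :: real
  assumes pt_meas[measurable]: "pt \<in> borel_measurable M"
    and pt_nonneg: "\<forall>x\<in>space M. 0 \<le> pt x"
    and pt_int: "integrable M pt"
    and Z_pos: "0 < (\<integral>x. pt x \<partial>M)"
    and q_dens: "\<forall>k\<in>{1..K}. q k \<in> borel_measurable M \<and> integrable M (q k) \<and> (\<integral>x. q k x \<partial>M) = 1"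
    and Cm_pos: "0 < Cm" and Cp_pos: "0 < Cp"
    and q_bounds: "\<forall>k\<in>{1..K}. \<forall>x\<in>space M. Cm \<le> q k x \<and> q k x \<le> Cp"
    and \<alpha>_nonneg: "\<forall>k\<in>{1..K}. 0 \<le> \<alpha> k"
    and \<alpha>_sum: "(\<Sum>k\<in>{1..K}. \<alpha> k) = 1"
begin

abbreviation "S \<equiv> {1..K}"
abbreviation "Q \<equiv> pair_law M q \<alpha> K"
abbreviation "C \<equiv> count_space S"
definition "fd = (\<lambda>(x::'a, l::nat). ennreal (\<alpha> l * q l x))"

lemma K_pos: "1 \<le> K"
  using \<alpha>_sum by (cases K) auto

lemma q_meas[measurable]: "k \<in> S \<Longrightarrow> q k \<in> borel_measurable M"
  using q_dens by auto

lemma q_int: "k \<in> S \<Longrightarrow> integrable M (q k)"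
  using q_dens by auto

lemma q_one: "k \<in> S \<Longrightarrow> (\<integral>x. q k x \<partial>M) = 1"
  using q_dens by auto

lemma q_lo: "k \<in> S \<Longrightarrow> x \<in> space M \<Longrightarrow> Cm \<le> q k x"
  using q_bounds by auto
lemma q_hi: "k \<in> S \<Longrightarrow> x \<in> space M \<Longrightarrow> q k x \<le> Cp"
  using q_bounds by auto

lemma finM: "finite_measure M"
proof
  have "ennreal Cm * emeasure M (space M) = (\<integral>\<^sup>+x. ennreal Cm \<partial>M)"
    by (simp add: nn_integral_const)
  also have "\<dots> \<le> (\<integral>\<^sup>+x. ennreal (q 1 x) \<partial>M)"
    using K_pos by (intro nn_integral_mono ennreal_leI q_lo) auto
  also have "\<dots> = ennreal (\<integral>x. q 1 x \<partial>M)"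
    using K_pos q_lo Cm_pos
    by (intro nn_integral_eq_integral q_int AE_I2) (auto intro: order.trans[OF less_imp_le])
  also have "\<dots> = 1" using K_pos q_one by simp
  finally have le: "ennreal Cm * emeasure M (space M) \<le> 1" .
  show "emeasure M (space M) \<noteq> \<infinity>"
  proof
    assume "emeasure M (space M) = \<infinity>"
    then have "ennreal Cm * emeasure M (space M) = \<infinity>"
      using Cm_pos by (simp add: ennreal_mult_top)
    with le show False by (simp add: top_unique)
  qed
qed

interpretation M: finite_measure M by (rule finM)

lemma fd_meas[measurable]: "fd \<in> borel_measurable (M \<Otimes>\<^sub>M C)"
proof -
  have "(\<lambda>y. (\<lambda>l y. ennreal (\<alpha> l * q l (fst y))) (snd y) y) \<in> borel_measurable (M \<Otimes>\<^sub>M C)"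
    by (rule measurable_compose_countable'[where I=S]) auto
  then show ?thesis by (simp add: fd_def case_prod_beta')
qed

lemma Q_def: "Q = density (M \<Otimes>\<^sub>M C) fd"
  unfolding pair_law_def fd_def ..
lemma sets_Q: "sets Q = sets (M \<Otimes>\<^sub>M C)"
  unfolding Q_def by (rule sets_density)
lemma space_Q: "space Q = space (M \<Otimes>\<^sub>M C)"
  unfolding Q_def by (rule space_density)

lemma PL:
  assumes h[measurable]: "h \<in> borel_measurable (M \<Otimes>\<^sub>M C)"
  shows "(\<integral>\<^sup>+y. h y \<partial>Q) = (\<Sum>l\<in>S. \<integral>\<^sup>+x. ennreal (\<alpha> l * q l x) * h (x, l) \<partial>M)"
proof -
  interpret C: finite_measure C by (rule finite_measure_count_space) simp
  interpret MC: pair_sigma_finite M C ..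
  have "(\<integral>\<^sup>+y. h y \<partial>Q) = (\<integral>\<^sup>+y. fd y * h y \<partial>(M \<Otimes>\<^sub>M C))"
    unfolding Q_def by (rule nn_integral_density[OF fd_meas h])
  also have "\<dots> = (\<integral>\<^sup>+l. \<integral>\<^sup>+x. fd (x, l) * h (x, l) \<partial>M \<partial>C)"
    by (subst MC.nn_integral_snd[symmetric]) auto
  also have "\<dots> = (\<Sum>l\<in>S. \<integral>\<^sup>+x. ennreal (\<alpha> l * q l x) * h (x, l) \<partial>M)"
    by (subst nn_integral_count_space_finite) (auto simp: fd_def)
  finally show ?thesis .
qed

lemma prob_Q: "prob_space Q"
proof
  have "emeasure Q (space Q) = (\<integral>\<^sup>+y. 1 \<partial>Q)" by simp
  also have "\<dots> = (\<Sum>l\<in>S. \<integral>\<^sup>+x. ennreal (\<alpha> l * q l x) \<partial>M)"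
    by (subst PL) auto
  also have "\<dots> = (\<Sum>l\<in>S. ennreal (\<alpha> l))"
  proof (rule sum.cong[OF refl])
    fix l assume l: "l \<in> S"
    have "(\<integral>\<^sup>+x. ennreal (\<alpha> l * q l x) \<partial>M) = ennreal (\<integral>x. \<alpha> l * q l x \<partial>M)"
      using l \<alpha>_nonneg q_lo Cm_pos
      by (intro nn_integral_eq_integral integrable_mult_right q_int AE_I2)
         (auto intro!: mult_nonneg_nonneg intro: order.trans[OF less_imp_le])
    also have "\<dots> = ennreal (\<alpha> l)" using l q_one by simp
    finally show "(\<integral>\<^sup>+x. ennreal (\<alpha> l * q l x) \<partial>M) = ennreal (\<alpha> l)" .
  qed
  also have "\<dots> = ennreal (\<Sum>l\<in>S. \<alpha> l)"
    using \<alpha>_nonneg by (subst sum_ennreal) auto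
  finally show "emeasure Q (space Q) = 1" using \<alpha>_sum by simp
qed

lemma measurable_Q: "measurable N Q = measurable N (M \<Otimes>\<^sub>M C)"
  by (rule measurable_cong_sets[OF refl sets_Q])
lemma measurable_Q1: "measurable Q N = measurable (M \<Otimes>\<^sub>M C) N"
  by (rule measurable_cong_sets[OF sets_Q refl])

lemma pair_const_meas: "f \<in> measurable N M \<Longrightarrow> l \<in> S \<Longrightarrow> (\<lambda>p. (f p, l)) \<in> measurable N Q"
  unfolding measurable_Q by (intro measurable_Pair) auto

lemma Phi_meas:
  assumes J: "finite J" and ls: "ls \<in> PiE J (\<lambda>_. S)" and G: "G \<in> borel_measurable (PiM J (\<lambda>_. Q))"
  shows "(\<lambda>x. (\<Prod>n\<in>J. fd (x n, ls n)) * G (\<lambda>n\<in>J. (x n, ls n))) \<in> borel_measurable (PiM J (\<lambda>_. M))"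
proof -
  have r: "(\<lambda>x. \<lambda>n\<in>J. (x n, ls n)) \<in> measurable (PiM J (\<lambda>_. M)) (PiM J (\<lambda>_. Q))"
    by (rule measurable_restrict) (use ls in \<open>auto intro!: pair_const_meas\<close>)
  have c: "(\<lambda>x. (x n, ls n)) \<in> measurable (PiM J (\<lambda>_. M)) (M \<Otimes>\<^sub>M C)" if "n \<in> J" for n
    using pair_const_meas[OF measurable_component_singleton[OF that] PiE_mem[OF ls that]]
    by (simp add: measurable_Q)
  have p: "(\<lambda>x. \<Prod>n\<in>J. fd (x n, ls n)) \<in> borel_measurable (PiM J (\<lambda>_. M))"
    by (intro borel_measurable_prod_ennreal measurable_compose[OF c fd_meas])
  show ?thesis
    by (intro borel_measurable_times_ennreal p measurable_compose[OF r G])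
qed

lemma LAB:
  assumes "finite I" and "G \<in> borel_measurable (PiM I (\<lambda>_. Q))"
  shows "(\<integral>\<^sup>+w. G w \<partial>PiM I (\<lambda>_. Q)) =
    (\<Sum>ls\<in>PiE I (\<lambda>_. S). \<integral>\<^sup>+x. (\<Prod>n\<in>I. fd (x n, ls n)) * G (\<lambda>n\<in>I. (x n, ls n)) \<partial>PiM I (\<lambda>_. M))"
  using assms
proof (induction I arbitrary: G rule: finite_induct)
  case empty
  then show ?case by (simp add: PiM_empty nn_integral_count_space_finite)
next
  case (insert i I)
  interpret PQ: product_sigma_finite "\<lambda>_. Q"
    unfolding product_sigma_finite_def using prob_Q prob_space_imp_sigma_finite by blast
  interpret PM: product_sigma_finite "\<lambda>_. M"
    unfolding product_sigma_finite_def using M.sigma_finite_measure_axioms by blast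
  note G[measurable] = insert.prems
  define H where "H l w = (\<integral>\<^sup>+x. ennreal (\<alpha> l * q l x) * G (w(i := (x, l))) \<partial>M)" for l w
  have Hm: "H l \<in> borel_measurable (PiM I (\<lambda>_. Q))" if l: "l \<in> S" for l
  proof -
    have "(\<lambda>p. (fst p)(i := (snd p, l))) \<in> measurable (PiM I (\<lambda>_. Q) \<Otimes>\<^sub>M M) (PiM (insert i I) (\<lambda>_. Q))"
      by (rule measurable_fun_upd[where J=I]) (auto intro: pair_const_meas l)
    then have "(\<lambda>p. G ((fst p)(i := (snd p, l)))) \<in> borel_measurable (PiM I (\<lambda>_. Q) \<Otimes>\<^sub>M M)"
      by (rule measurable_compose) (rule G)
    then have "(\<lambda>(w, x). ennreal (\<alpha> l * q l x) * G (w(i := (x, l)))) \<in> borel_measurable (PiM I (\<lambda>_. Q) \<Otimes>\<^sub>M M)"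
      using l by (simp add: case_prod_beta')
    then show ?thesis unfolding H_def by (rule M.borel_measurable_nn_integral)
  qed
  have "(\<integral>\<^sup>+w. G w \<partial>PiM (insert i I) (\<lambda>_. Q)) = (\<integral>\<^sup>+w. \<integral>\<^sup>+y. G (w(i := y)) \<partial>Q \<partial>PiM I (\<lambda>_. Q))"
    by (rule PQ.product_nn_integral_insert) (use insert in auto)
  also have "\<dots> = (\<integral>\<^sup>+w. (\<Sum>l\<in>S. H l w) \<partial>PiM I (\<lambda>_. Q))"
  proof (rule nn_integral_cong)
    fix w assume w: "w \<in> space (PiM I (\<lambda>_. Q))"
    have "(\<lambda>y. G (w(i := y))) \<in> borel_measurable Q"
      using measurable_component_update[OF w insert(2)] by (rule measurable_compose) (rule G)
    then show "(\<integral>\<^sup>+y. G (w(i := y)) \<partial>Q) = (\<Sum>l\<in>S. H l w)"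
      unfolding H_def by (intro PL) (simp add: measurable_Q1)
  qed
  also have "\<dots> = (\<Sum>l\<in>S. \<integral>\<^sup>+w. H l w \<partial>PiM I (\<lambda>_. Q))"
    by (rule nn_integral_sum) (rule Hm)
  also have "\<dots> = (\<Sum>l\<in>S. \<Sum>ls\<in>PiE I (\<lambda>_. S). \<integral>\<^sup>+x. (\<Prod>n\<in>I. fd (x n, ls n)) * H l (\<lambda>n\<in>I. (x n, ls n)) \<partial>PiM I (\<lambda>_. M))"
    by (intro sum.cong refl insert.IH Hm)
  also have "\<dots> = (\<Sum>l\<in>S. \<Sum>ls\<in>PiE I (\<lambda>_. S). \<integral>\<^sup>+x. (\<Prod>n\<in>insert i I. fd (x n, (ls(i:=l)) n)) * G (\<lambda>n\<in>insert i I. (x n, (ls(i:=l)) n)) \<partial>PiM (insert i I) (\<lambda>_. M))"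
  proof (intro sum.cong refl)
    fix l ls assume l: "l \<in> S" and ls: "ls \<in> PiE I (\<lambda>_. S)"
    have ls': "ls(i:=l) \<in> PiE (insert i I) (\<lambda>_. S)"
      using l ls insert(2) by (auto simp: PiE_def extensional_def)
    have "(\<integral>\<^sup>+x. (\<Prod>n\<in>insert i I. fd (x n, (ls(i:=l)) n)) * G (\<lambda>n\<in>insert i I. (x n, (ls(i:=l)) n)) \<partial>PiM (insert i I) (\<lambda>_. M))
       = (\<integral>\<^sup>+x. \<integral>\<^sup>+y. (\<Prod>n\<in>insert i I. fd ((x(i:=y)) n, (ls(i:=l)) n)) * G (\<lambda>n\<in>insert i I. ((x(i:=y)) n, (ls(i:=l)) n)) \<partial>M \<partial>PiM I (\<lambda>_. M))"
      using Phi_meas[OF finite_insert[THEN iffD2, OF insert(1)] ls' G]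
      by (rule PM.product_nn_integral_insert[OF insert(1,2)])
    also have "\<dots> = (\<integral>\<^sup>+x. (\<Prod>n\<in>I. fd (x n, ls n)) * H l (\<lambda>n\<in>I. (x n, ls n)) \<partial>PiM I (\<lambda>_. M))"
    proof (rule nn_integral_cong)
      fix x assume x: "x \<in> space (PiM I (\<lambda>_. M))"
      let ?r = "\<lambda>n\<in>I. (x n, ls n)"
      have eq: "(\<Prod>n\<in>insert i I. fd ((x(i:=y)) n, (ls(i:=l)) n)) * G (\<lambda>n\<in>insert i I. ((x(i:=y)) n, (ls(i:=l)) n))
          = (\<Prod>n\<in>I. fd (x n, ls n)) * (ennreal (\<alpha> l * q l y) * G (?r(i := (y, l))))" for y
      proof -
        have "(\<Prod>n\<in>insert i I. fd ((x(i:=y)) n, (ls(i:=l)) n)) = fd (y, l) * (\<Prod>n\<in>I. fd (x n, ls n))"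
        proof -
          have "(\<Prod>n\<in>I. fd ((x(i:=y)) n, (ls(i:=l)) n)) = (\<Prod>n\<in>I. fd (x n, ls n))"
            using insert(2) by (intro prod.cong) auto
          then show ?thesis by (simp only: prod.insert[OF insert(1,2)] fun_upd_same)
        qed
        moreover have "(\<lambda>n\<in>insert i I. ((x(i:=y)) n, (ls(i:=l)) n)) = ?r(i := (y, l))"
          using insert(2) by (auto simp: restrict_def)
        ultimately show ?thesis by (simp add: fd_def mult_ac)
      qed
      have rm: "?r \<in> space (PiM I (\<lambda>_. Q))"
        using x ls by (auto simp: space_PiM space_Q space_pair_measure PiE_def extensional_def)
      have m: "(\<lambda>y. ennreal (\<alpha> l * q l y) * G (?r(i := (y, l)))) \<in> borel_measurable M"
      proof -
        have "(\<lambda>y. ?r(i := (y, l))) \<in> measurable M (PiM (insert i I) (\<lambda>_. Q))"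
          using measurable_compose[OF pair_const_meas[OF measurable_ident_sets[OF refl] l] measurable_component_update[OF rm insert(2)]] 
          by (simp add: comp_def)
        from measurable_compose[OF this G] have mG: "(\<lambda>y. G (?r(i := (y, l)))) \<in> borel_measurable M" .
        have [measurable]: "q l \<in> borel_measurable M" using l by simp
        show ?thesis by (rule borel_measurable_times_ennreal[OF _ mG]) measurable
      qed
      show "(\<integral>\<^sup>+y. (\<Prod>n\<in>insert i I. fd ((x(i:=y)) n, (ls(i:=l)) n)) * G (\<lambda>n\<in>insert i I. ((x(i:=y)) n, (ls(i:=l)) n)) \<partial>M)
          = (\<Prod>n\<in>I. fd (x n, ls n)) * H l ?r"
        unfolding eq H_def by (rule nn_integral_cmult[OF m])
    qed
    finally show "(\<integral>\<^sup>+x. (\<Prod>n\<in>I. fd (x n, ls n)) * H l (\<lambda>n\<in>I. (x n, ls n)) \<partial>PiM I (\<lambda>_. M)) =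
       (\<integral>\<^sup>+x. (\<Prod>n\<in>insert i I. fd (x n, (ls(i:=l)) n)) * G (\<lambda>n\<in>insert i I. (x n, (ls(i:=l)) n)) \<partial>PiM (insert i I) (\<lambda>_. M))"
      by simp
  qed
  also have "\<dots> = (\<Sum>(l,ls)\<in>S \<times> PiE I (\<lambda>_. S). \<integral>\<^sup>+x. (\<Prod>n\<in>insert i I. fd (x n, (ls(i:=l)) n)) * G (\<lambda>n\<in>insert i I. (x n, (ls(i:=l)) n)) \<partial>PiM (insert i I) (\<lambda>_. M))"
    by (subst sum.cartesian_product) simp
  also have "\<dots> = (\<Sum>ls\<in>PiE (insert i I) (\<lambda>_. S). \<integral>\<^sup>+x. (\<Prod>n\<in>insert i I. fd (x n, ls n)) * G (\<lambda>n\<in>insert i I. (x n, ls n)) \<partial>PiM (insert i I) (\<lambda>_. M))"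
    using insert(2)
    by (intro sum.reindex_bij_witness[of _ "\<lambda>ls. (ls i, ls(i := undefined))" "\<lambda>(l,ls). ls(i := l)"])
       (auto simp: PiE_def extensional_def)
  finally show ?case .
qed
lemma q_nonneg: "k \<in> S \<Longrightarrow> x \<in> space M \<Longrightarrow> 0 \<le> q k x"
  using q_lo Cm_pos by (meson less_imp_le order.trans)

lemma PRODQ:
  assumes I: "finite I" and ls: "ls \<in> PiE I (\<lambda>_. S)"
    and em[measurable]: "\<And>n. n \<in> I \<Longrightarrow> e n \<in> borel_measurable M"
    and en: "\<And>n y. n \<in> I \<Longrightarrow> y \<in> space M \<Longrightarrow> 0 \<le> e n y"
    and ei: "\<And>n. n \<in> I \<Longrightarrow> integrable M (\<lambda>y. q (ls n) y * e n y)"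
  shows "(\<integral>\<^sup>+x. (\<Prod>n\<in>I. fd (x n, ls n)) * ennreal (\<Prod>n\<in>I. e n (x n)) \<partial>PiM I (\<lambda>_. M))
       = ennreal (\<Prod>n\<in>I. \<alpha> (ls n) * (\<integral>y. q (ls n) y * e n y \<partial>M))"
proof -
  interpret PM: product_sigma_finite "\<lambda>_. M"
    unfolding product_sigma_finite_def using M.sigma_finite_measure_axioms by blast
  have lsS: "n \<in> I \<Longrightarrow> ls n \<in> S" for n using ls by auto
  have gm: "(\<lambda>y. ennreal (\<alpha> (ls n) * q (ls n) y * e n y)) \<in> borel_measurable M" if n: "n \<in> I" for n
  proof -
    have [measurable]: "q (ls n) \<in> borel_measurable M" "e n \<in> borel_measurable M" using n lsS em by auto
    show ?thesis by measurable
  qed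
  have "(\<integral>\<^sup>+x. (\<Prod>n\<in>I. fd (x n, ls n)) * ennreal (\<Prod>n\<in>I. e n (x n)) \<partial>PiM I (\<lambda>_. M))
      = (\<integral>\<^sup>+x. (\<Prod>n\<in>I. ennreal (\<alpha> (ls n) * q (ls n) (x n) * e n (x n))) \<partial>PiM I (\<lambda>_. M))"
  proof (rule nn_integral_cong)
    fix x assume x: "x \<in> space (PiM I (\<lambda>_. M))"
    then have xn: "n \<in> I \<Longrightarrow> x n \<in> space M" for n by (auto simp: space_PiM)
    have "ennreal (\<Prod>n\<in>I. e n (x n)) = (\<Prod>n\<in>I. ennreal (e n (x n)))"
      using xn en by (intro prod_ennreal[symmetric]) auto
    then show "(\<Prod>n\<in>I. fd (x n, ls n)) * ennreal (\<Prod>n\<in>I. e n (x n)) = (\<Prod>n\<in>I. ennreal (\<alpha> (ls n) * q (ls n) (x n) * e n (x n)))"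
      using xn en lsS \<alpha>_nonneg q_nonneg
      by (simp add: fd_def prod.distrib[symmetric] ennreal_mult' ennreal_mult'')
  qed
  also have "\<dots> = (\<Prod>n\<in>I. \<integral>\<^sup>+y. ennreal (\<alpha> (ls n) * q (ls n) y * e n y) \<partial>M)"
    by (rule PM.product_nn_integral_prod[OF I gm])
  also have "\<dots> = (\<Prod>n\<in>I. ennreal (\<alpha> (ls n) * (\<integral>y. q (ls n) y * e n y \<partial>M)))"
  proof (rule prod.cong[OF refl])
    fix n assume n: "n \<in> I"
    have "(\<integral>\<^sup>+y. ennreal (\<alpha> (ls n) * q (ls n) y * e n y) \<partial>M) = ennreal (\<integral>y. \<alpha> (ls n) * q (ls n) y * e n y \<partial>M)"
      using ei[OF n] n lsS \<alpha>_nonneg q_nonneg en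
      by (intro nn_integral_eq_integral AE_I2)
         (auto simp: mult.assoc intro!: integrable_mult_right mult_nonneg_nonneg)
    then show "(\<integral>\<^sup>+y. ennreal (\<alpha> (ls n) * q (ls n) y * e n y) \<partial>M) = ennreal (\<alpha> (ls n) * (\<integral>y. q (ls n) y * e n y \<partial>M))"
      by (simp add: mult.assoc)
  qed
  also have "\<dots> = ennreal (\<Prod>n\<in>I. \<alpha> (ls n) * (\<integral>y. q (ls n) y * e n y \<partial>M))"
    using ei lsS \<alpha>_nonneg q_nonneg en
    by (intro prod_ennreal mult_nonneg_nonneg integral_nonneg_AE AE_I2) auto
  finally show ?thesis .
qed
lemma prodfd_meas:
  assumes ls: "ls \<in> PiE J (\<lambda>_. S)"
  shows "(\<lambda>x. (\<Prod>n\<in>J. fd (x n, ls n))) \<in> borel_measurable (PiM J (\<lambda>_. M))"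
proof -
  have c: "(\<lambda>x. (x n, ls n)) \<in> measurable (PiM J (\<lambda>_. M)) (M \<Otimes>\<^sub>M C)" if "n \<in> J" for n
    using pair_const_meas[OF measurable_component_singleton[OF that] PiE_mem[OF ls that]]
    by (simp add: measurable_Q)
  show ?thesis
    by (intro borel_measurable_prod_ennreal measurable_compose[OF c fd_meas])
qed

lemma prode_meas:
  assumes "\<And>n. n \<in> J \<Longrightarrow> e n \<in> borel_measurable M"
  shows "(\<lambda>x. ennreal (\<Prod>n\<in>J. e n (x n))) \<in> borel_measurable (PiM J (\<lambda>_. M))"
proof -
  have "(\<lambda>x. (\<Prod>n\<in>J. e n (x n))) \<in> borel_measurable (PiM J (\<lambda>_. M))"
  proof (rule borel_measurable_prod)
    fix n assume n: "n \<in> J"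
    show "(\<lambda>x. e n (x n)) \<in> borel_measurable (PiM J (\<lambda>_. M))"
      using measurable_compose[OF measurable_component_singleton[OF n] assms[OF n]] .
  qed
  then show ?thesis by measurable
qed

definition Wt :: "nat set \<Rightarrow> (nat \<Rightarrow> nat) \<Rightarrow> real" where "Wt J ls = (\<Prod>n\<in>J. \<alpha> (ls n))"

lemma intq: "k \<in> S \<Longrightarrow> (\<integral>y. q k y * 1 \<partial>M) = 1"
  using q_one by simp

lemma GEN1:
  assumes I: "finite I" and ls: "ls \<in> PiE I (\<lambda>_. S)"
    and um[measurable]: "u \<in> borel_measurable M"
    and un: "\<And>y. y \<in> space M \<Longrightarrow> 0 \<le> u y"
    and ui: "\<And>s. s \<in> S \<Longrightarrow> integrable M (\<lambda>y. q s y * u y)"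
  shows "(\<integral>\<^sup>+x. (\<Prod>n\<in>I. fd (x n, ls n)) * ennreal (\<Sum>n\<in>I. u (x n)) \<partial>PiM I (\<lambda>_. M))
       = ennreal (Wt I ls * (\<Sum>n\<in>I. \<integral>y. q (ls n) y * u y \<partial>M))"
proof -
  have lsS: "n \<in> I \<Longrightarrow> ls n \<in> S" for n using ls by auto
  define e where "e n0 n y = (if n = n0 then u y else 1)" for n0 n :: nat and y
  have em: "e n0 n \<in> borel_measurable M" for n0 n unfolding e_def by simp
  have "(\<integral>\<^sup>+x. (\<Prod>n\<in>I. fd (x n, ls n)) * ennreal (\<Sum>n\<in>I. u (x n)) \<partial>PiM I (\<lambda>_. M))
      = (\<integral>\<^sup>+x. (\<Sum>n0\<in>I. (\<Prod>n\<in>I. fd (x n, ls n)) * ennreal (\<Prod>n\<in>I. e n0 n (x n))) \<partial>PiM I (\<lambda>_. M))"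
  proof (rule nn_integral_cong)
    fix x assume x: "x \<in> space (PiM I (\<lambda>_. M))"
    then have xn: "n \<in> I \<Longrightarrow> x n \<in> space M" for n by (auto simp: space_PiM)
    have "(\<Prod>n\<in>I. e n0 n (x n)) = u (x n0)" if "n0 \<in> I" for n0
      using that I by (simp add: e_def prod.delta)
    then have "ennreal (\<Sum>n\<in>I. u (x n)) = (\<Sum>n0\<in>I. ennreal (\<Prod>n\<in>I. e n0 n (x n)))"
      using xn un by (simp add: sum_nonneg)
    then show "(\<Prod>n\<in>I. fd (x n, ls n)) * ennreal (\<Sum>n\<in>I. u (x n)) = (\<Sum>n0\<in>I. (\<Prod>n\<in>I. fd (x n, ls n)) * ennreal (\<Prod>n\<in>I. e n0 n (x n)))"
      by (simp add: sum_distrib_left)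
  qed
  also have "\<dots> = (\<Sum>n0\<in>I. \<integral>\<^sup>+x. (\<Prod>n\<in>I. fd (x n, ls n)) * ennreal (\<Prod>n\<in>I. e n0 n (x n)) \<partial>PiM I (\<lambda>_. M))"
    by (intro nn_integral_sum borel_measurable_times_ennreal prodfd_meas[OF ls] prode_meas em)
  also have "\<dots> = (\<Sum>n0\<in>I. ennreal (\<Prod>n\<in>I. \<alpha> (ls n) * (\<integral>y. q (ls n) y * e n0 n y \<partial>M)))"
  proof (rule sum.cong[OF refl], rule PRODQ[OF I ls em])
    fix n0 n y assume "n \<in> I" "y \<in> space M" then show "0 \<le> e n0 n y" using un by (simp add: e_def)
  next
    fix n0 n assume "n \<in> I" then show "integrable M (\<lambda>y. q (ls n) y * e n0 n y)"
      using ui lsS q_int by (cases "n = n0") (auto simp: e_def)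
  qed
  also have "\<dots> = (\<Sum>n0\<in>I. ennreal (Wt I ls * (\<integral>y. q (ls n0) y * u y \<partial>M)))"
  proof (rule sum.cong[OF refl])
    fix n0 assume n0: "n0 \<in> I"
    have "(\<Prod>n\<in>I. \<alpha> (ls n) * (\<integral>y. q (ls n) y * e n0 n y \<partial>M)) = Wt I ls * (\<Prod>n\<in>I. (\<integral>y. q (ls n) y * e n0 n y \<partial>M))"
      by (simp add: Wt_def prod.distrib)
    also have "(\<Prod>n\<in>I. (\<integral>y. q (ls n) y * e n0 n y \<partial>M)) = (\<Prod>n\<in>I. if n = n0 then (\<integral>y. q (ls n0) y * u y \<partial>M) else 1)"
      using lsS q_one by (intro prod.cong refl) (auto simp: e_def)
    also have "\<dots> = (\<integral>y. q (ls n0) y * u y \<partial>M)"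
      using n0 I by (simp add: prod.delta)
    finally show "ennreal (\<Prod>n\<in>I. \<alpha> (ls n) * (\<integral>y. q (ls n) y * e n0 n y \<partial>M)) = ennreal (Wt I ls * (\<integral>y. q (ls n0) y * u y \<partial>M))"
      by simp
  qed
  also have "\<dots> = ennreal (\<Sum>n0\<in>I. Wt I ls * (\<integral>y. q (ls n0) y * u y \<partial>M))"
    using lsS \<alpha>_nonneg q_nonneg un
    by (intro sum_ennreal mult_nonneg_nonneg integral_nonneg_AE AE_I2) (auto simp: Wt_def intro!: prod_nonneg)
  finally show ?thesis by (simp add: sum_distrib_left)
qed
lemma GEN2:
  assumes I: "finite I" and ls: "ls \<in> PiE I (\<lambda>_. S)"
    and um[measurable]: "u \<in> borel_measurable M"
    and un: "\<And>y. y \<in> space M \<Longrightarrow> 0 \<le> u y"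
    and ui: "\<And>s. s \<in> S \<Longrightarrow> integrable M (\<lambda>y. q s y * u y)"
    and ui2: "\<And>s. s \<in> S \<Longrightarrow> integrable M (\<lambda>y. q s y * (u y)\<^sup>2)"
  shows "(\<integral>\<^sup>+x. (\<Prod>n\<in>I. fd (x n, ls n)) * ennreal ((\<Sum>n\<in>I. u (x n))\<^sup>2) \<partial>PiM I (\<lambda>_. M))
       = ennreal (Wt I ls * (\<Sum>n\<in>I. \<Sum>n'\<in>I. if n = n' then (\<integral>y. q (ls n) y * (u y)\<^sup>2 \<partial>M)
             else (\<integral>y. q (ls n) y * u y \<partial>M) * (\<integral>y. q (ls n') y * u y \<partial>M)))"
proof -
  have lsS: "n \<in> I \<Longrightarrow> ls n \<in> S" for n using ls by auto
  define e where "e n n' j y = (if j = n then u y else 1) * (if j = n' then u y else 1)" for n n' j :: nat and y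
  have em: "e n n' j \<in> borel_measurable M" for n n' j unfolding e_def by simp
  define T where "T n n' = (if n = n' then (\<integral>y. q (ls n) y * (u y)\<^sup>2 \<partial>M)
             else (\<integral>y. q (ls n) y * u y \<partial>M) * (\<integral>y. q (ls n') y * u y \<partial>M))" for n n'
  have Tn: "0 \<le> T n n'" if "n \<in> I" "n' \<in> I" for n n'
    using that lsS q_nonneg un unfolding T_def
    by (auto intro!: mult_nonneg_nonneg integral_nonneg_AE AE_I2)
  have "(\<integral>\<^sup>+x. (\<Prod>n\<in>I. fd (x n, ls n)) * ennreal ((\<Sum>n\<in>I. u (x n))\<^sup>2) \<partial>PiM I (\<lambda>_. M))
      = (\<integral>\<^sup>+x. (\<Sum>n\<in>I. \<Sum>n'\<in>I. (\<Prod>j\<in>I. fd (x j, ls j)) * ennreal (\<Prod>j\<in>I. e n n' j (x j))) \<partial>PiM I (\<lambda>_. M))"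
  proof (rule nn_integral_cong)
    fix x assume x: "x \<in> space (PiM I (\<lambda>_. M))"
    then have xn: "n \<in> I \<Longrightarrow> x n \<in> space M" for n by (auto simp: space_PiM)
    have pe: "(\<Prod>j\<in>I. e n n' j (x j)) = u (x n) * u (x n')" if "n \<in> I" "n' \<in> I" for n n'
      using that I by (simp add: e_def prod.distrib prod.delta)
    have "(\<Sum>n\<in>I. u (x n))\<^sup>2 = (\<Sum>n\<in>I. \<Sum>n'\<in>I. u (x n) * u (x n'))"
      by (simp add: power2_eq_square sum_product)
    then have "ennreal ((\<Sum>n\<in>I. u (x n))\<^sup>2) = (\<Sum>n\<in>I. \<Sum>n'\<in>I. ennreal (\<Prod>j\<in>I. e n n' j (x j)))"
      using xn un pe by (simp add: sum_nonneg)
    then show "(\<Prod>n\<in>I. fd (x n, ls n)) * ennreal ((\<Sum>n\<in>I. u (x n))\<^sup>2) = (\<Sum>n\<in>I. \<Sum>n'\<in>I. (\<Prod>j\<in>I. fd (x j, ls j)) * ennreal (\<Prod>j\<in>I. e n n' j (x j)))"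
      by (simp add: sum_distrib_left)
  qed
  also have "\<dots> = (\<Sum>n\<in>I. \<Sum>n'\<in>I. \<integral>\<^sup>+x. (\<Prod>j\<in>I. fd (x j, ls j)) * ennreal (\<Prod>j\<in>I. e n n' j (x j)) \<partial>PiM I (\<lambda>_. M))"
    by (simp add: nn_integral_sum borel_measurable_times_ennreal prodfd_meas[OF ls] prode_meas em borel_measurable_sum)
  also have "\<dots> = (\<Sum>n\<in>I. \<Sum>n'\<in>I. ennreal (\<Prod>j\<in>I. \<alpha> (ls j) * (\<integral>y. q (ls j) y * e n n' j y \<partial>M)))"
  proof (intro sum.cong refl, rule PRODQ[OF I ls em])
    fix n n' j y assume "j \<in> I" "y \<in> space M" then show "0 \<le> e n n' j y" using un by (simp add: e_def)
  next
    fix n n' j assume "j \<in> I"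
    then have j: "ls j \<in> S" using lsS by blast
    show "integrable M (\<lambda>y. q (ls j) y * e n n' j y)"
      using ui[OF j] ui2[OF j] q_int[OF j]
      by (cases "j = n"; cases "j = n'") (simp_all add: e_def power2_eq_square)
  qed
  also have "\<dots> = (\<Sum>n\<in>I. \<Sum>n'\<in>I. ennreal (Wt I ls * T n n'))"
  proof (intro sum.cong refl)
    fix n n' assume n: "n \<in> I" and n': "n' \<in> I"
    have "(\<Prod>j\<in>I. \<alpha> (ls j) * (\<integral>y. q (ls j) y * e n n' j y \<partial>M)) = Wt I ls * (\<Prod>j\<in>I. (\<integral>y. q (ls j) y * e n n' j y \<partial>M))"
      by (simp add: Wt_def prod.distrib)
    also have "(\<Prod>j\<in>I. (\<integral>y. q (ls j) y * e n n' j y \<partial>M)) = (\<Prod>j\<in>{n, n'}. (\<integral>y. q (ls j) y * e n n' j y \<partial>M))"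
      using I n n' lsS q_one by (intro prod.mono_neutral_right) (auto simp: e_def)
    also have "\<dots> = T n n'"
      by (cases "n = n'") (auto simp: T_def e_def power2_eq_square)
    finally show "ennreal (\<Prod>j\<in>I. \<alpha> (ls j) * (\<integral>y. q (ls j) y * e n n' j y \<partial>M)) = ennreal (Wt I ls * T n n')"
      by simp
  qed
  also have "\<dots> = ennreal (\<Sum>n\<in>I. \<Sum>n'\<in>I. Wt I ls * T n n')"
  proof -
    have W0: "0 \<le> Wt I ls" using lsS \<alpha>_nonneg by (auto simp: Wt_def intro!: prod_nonneg)
    show ?thesis using W0 Tn
      by (subst sum_ennreal[symmetric], simp add: sum_nonneg)
         (intro sum.cong refl sum_ennreal, simp)
  qed
  finally show ?thesis by (simp add: sum_distrib_left T_def)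
qed
lemma DPROD:
  assumes I: "finite I"
  shows "(\<Sum>ls\<in>PiE I (\<lambda>_. S). Wt I ls * (\<Prod>n\<in>I. F n (ls n))) = (\<Prod>n\<in>I. \<Sum>s\<in>S. \<alpha> s * F n s)"
  using prod_sum_PiE[OF I, of "\<lambda>_. S" "\<lambda>n s. \<alpha> s * F n s"]
  by (simp add: Wt_def prod.distrib)

lemma D1: "finite I \<Longrightarrow> (\<Sum>ls\<in>PiE I (\<lambda>_. S). Wt I ls) = 1"
  using DPROD[of I "\<lambda>_ _. 1"] \<alpha>_sum by simp

lemma D2:
  assumes I: "finite I" and m: "m \<in> I"
  shows "(\<Sum>ls\<in>PiE I (\<lambda>_. S). Wt I ls * g (ls m)) = (\<Sum>s\<in>S. \<alpha> s * g s)"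
proof -
  have "(\<Sum>ls\<in>PiE I (\<lambda>_. S). Wt I ls * g (ls m)) = (\<Sum>ls\<in>PiE I (\<lambda>_. S). Wt I ls * (\<Prod>n\<in>I. if n = m then g (ls n) else 1))"
    using I m by (intro sum.cong refl) (simp add: prod.delta)
  also have "\<dots> = (\<Prod>n\<in>I. \<Sum>s\<in>S. \<alpha> s * (if n = m then g s else 1))"
    by (rule DPROD[OF I])
  also have "\<dots> = (\<Prod>n\<in>I. if n = m then (\<Sum>s\<in>S. \<alpha> s * g s) else 1)"
    using \<alpha>_sum by (intro prod.cong refl) auto
  also have "\<dots> = (\<Sum>s\<in>S. \<alpha> s * g s)" using I m by (simp add: prod.delta)
  finally show ?thesis .
qed

lemma D3:
  assumes I: "finite I" and m: "m \<in> I" and m': "m' \<in> I" and mm: "m \<noteq> m'"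
  shows "(\<Sum>ls\<in>PiE I (\<lambda>_. S). Wt I ls * (g (ls m) * h (ls m'))) = (\<Sum>s\<in>S. \<alpha> s * g s) * (\<Sum>s\<in>S. \<alpha> s * h s)"
proof -
  have "(\<Sum>ls\<in>PiE I (\<lambda>_. S). Wt I ls * (g (ls m) * h (ls m'))) = (\<Sum>ls\<in>PiE I (\<lambda>_. S). Wt I ls * (\<Prod>n\<in>I. (if n = m then g (ls n) else 1) * (if n = m' then h (ls n) else 1)))"
    using I m m' by (intro sum.cong refl) (simp add: prod.delta prod.distrib)
  also have "\<dots> = (\<Prod>n\<in>I. \<Sum>s\<in>S. \<alpha> s * ((if n = m then g s else 1) * (if n = m' then h s else 1)))"
    by (rule DPROD[OF I])
  also have "\<dots> = (\<Prod>n\<in>I. (if n = m then (\<Sum>s\<in>S. \<alpha> s * g s) else 1) * (if n = m' then (\<Sum>s\<in>S. \<alpha> s * h s) else 1))"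
    using \<alpha>_sum mm by (intro prod.cong refl) auto
  also have "\<dots> = (\<Sum>s\<in>S. \<alpha> s * g s) * (\<Sum>s\<in>S. \<alpha> s * h s)" using I m m' by (simp add: prod.delta prod.distrib)
  finally show ?thesis .
qed

definition mix :: "'a \<Rightarrow> real" where "mix y = (\<Sum>k\<in>S. \<alpha> k * q k y)"

lemma mix_lo: "y \<in> space M \<Longrightarrow> Cm \<le> mix y"
proof -
  assume y: "y \<in> space M"
  have "(\<Sum>k\<in>S. \<alpha> k * Cm) \<le> mix y"
    unfolding mix_def using y \<alpha>_nonneg q_lo by (intro sum_mono mult_left_mono) auto
  then show ?thesis using \<alpha>_sum by (simp add: sum_distrib_right[symmetric])
qed

lemma mix_hi: "y \<in> space M \<Longrightarrow> mix y \<le> Cp"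
proof -
  assume y: "y \<in> space M"
  have "mix y \<le> (\<Sum>k\<in>S. \<alpha> k * Cp)"
    unfolding mix_def using y \<alpha>_nonneg q_hi by (intro sum_mono mult_left_mono) auto
  then show ?thesis using \<alpha>_sum by (simp add: sum_distrib_right[symmetric])
qed

definition Dl :: "nat set \<Rightarrow> (nat \<Rightarrow> nat) \<Rightarrow> 'a \<Rightarrow> real" where "Dl I ls y = (\<Sum>m\<in>I. q (ls m) y)"

lemma Dl_lo: "finite I \<Longrightarrow> ls \<in> PiE I (\<lambda>_. S) \<Longrightarrow> y \<in> space M \<Longrightarrow> real (card I) * Cm \<le> Dl I ls y"
proof -
  assume a: "finite I" "ls \<in> PiE I (\<lambda>_. S)" "y \<in> space M"
  then have "\<And>i. i \<in> I \<Longrightarrow> Cm \<le> q (ls i) y" by (meson PiE_mem a(2,3) q_lo)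
  then show ?thesis unfolding Dl_def using sum_mono[of I "\<lambda>_. Cm" "\<lambda>m. q (ls m) y"] by simp
qed

lemma Dl_hi: "finite I \<Longrightarrow> ls \<in> PiE I (\<lambda>_. S) \<Longrightarrow> y \<in> space M \<Longrightarrow> Dl I ls y \<le> real (card I) * Cp"
proof -
  assume a: "finite I" "ls \<in> PiE I (\<lambda>_. S)" "y \<in> space M"
  then have "\<And>i. i \<in> I \<Longrightarrow> q (ls i) y \<le> Cp" by (meson PiE_mem a(2,3) q_hi)
  then show ?thesis unfolding Dl_def using sum_mono[of I "\<lambda>m. q (ls m) y" "\<lambda>_. Cp"] by simp
qed

lemma PW:
  assumes I: "finite I" "I \<noteq> {}" and y: "y \<in> space M"
  shows "(\<Sum>ls\<in>PiE I (\<lambda>_. S). Wt I ls / Dl I ls y) \<le> 1 / (real (card I) * mix y) + Cp\<^sup>2 / (Cm^3 * (real (card I))\<^sup>2)"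
proof -
  define N where "N = real (card I)"
  have "0 < card I" using I by (simp add: card_gt_0_iff)
  then have N1: "1 \<le> N" by (simp add: N_def)
  define mu where "mu = N * mix y"
  have mup: "N * Cm \<le> mu" using mix_lo[OF y] N1 by (simp add: mu_def)
  have Cmp: "0 < N * Cm" using N1 Cm_pos by simp
  have mu0: "0 < mu" using mup Cmp by linarith
  define e where "e s = q s y - mix y" for s
  have Dle: "Dl I ls y - mu = (\<Sum>m\<in>I. e (ls m))" for ls
    by (simp add: Dl_def e_def sum_subtractf mu_def N_def)
  have W0: "ls \<in> PiE I (\<lambda>_. S) \<Longrightarrow> 0 \<le> Wt I ls" for ls
    using \<alpha>_nonneg by (auto simp: Wt_def intro!: prod_nonneg)
  have pt: "1 / Dl I ls y \<le> 1 / mu - (Dl I ls y - mu) / mu\<^sup>2 + (Dl I ls y - mu)\<^sup>2 / (mu\<^sup>2 * (N * Cm))"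
    if ls: "ls \<in> PiE I (\<lambda>_. S)" for ls
  proof -
    define D where "D = Dl I ls y"
    have DN: "N * Cm \<le> D" using Dl_lo[OF I(1) ls y] by (simp add: D_def N_def)
    have D0: "0 < D" using DN Cmp by linarith
    have id: "1 / D = 1 / mu - (D - mu) / mu\<^sup>2 + (D - mu)\<^sup>2 / (mu\<^sup>2 * D)"
      using D0 mu0 by (simp add: field_simps power2_eq_square)
    have "(D - mu)\<^sup>2 / (mu\<^sup>2 * D) \<le> (D - mu)\<^sup>2 / (mu\<^sup>2 * (N * Cm))"
      using DN Cmp mu0 N1 Cm_pos D0 by (intro divide_left_mono mult_left_mono mult_pos_pos) auto
    then show ?thesis using id by (simp add: D_def)
  qed
  have s0: "(\<Sum>ls\<in>PiE I (\<lambda>_. S). Wt I ls * (Dl I ls y - mu)) = 0"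
  proof -
    have "(\<Sum>ls\<in>PiE I (\<lambda>_. S). Wt I ls * (Dl I ls y - mu)) = (\<Sum>m\<in>I. \<Sum>ls\<in>PiE I (\<lambda>_. S). Wt I ls * e (ls m))"
      by (simp add: Dle sum_distrib_left sum.swap[of _ I])
    also have "\<dots> = (\<Sum>m\<in>I. \<Sum>s\<in>S. \<alpha> s * e s)"
      using I by (intro sum.cong refl D2) auto
    also have "(\<Sum>s\<in>S. \<alpha> s * e s) = 0"
      using \<alpha>_sum by (simp add: e_def algebra_simps sum_subtractf sum_distrib_right[symmetric] mix_def)
    finally show ?thesis by simp
  qed
  have s2: "(\<Sum>ls\<in>PiE I (\<lambda>_. S). Wt I ls * (Dl I ls y - mu)\<^sup>2) \<le> N * Cp\<^sup>2"
  proof -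
    have ae0: "(\<Sum>s\<in>S. \<alpha> s * e s) = 0"
      using \<alpha>_sum by (simp add: e_def algebra_simps sum_subtractf sum_distrib_right[symmetric] mix_def)
    have "(\<Sum>ls\<in>PiE I (\<lambda>_. S). Wt I ls * (Dl I ls y - mu)\<^sup>2)
        = (\<Sum>m\<in>I. \<Sum>m'\<in>I. \<Sum>ls\<in>PiE I (\<lambda>_. S). Wt I ls * (e (ls m) * e (ls m')))"
    proof -
      have "(\<Sum>ls\<in>PiE I (\<lambda>_. S). Wt I ls * (Dl I ls y - mu)\<^sup>2)
         = (\<Sum>ls\<in>PiE I (\<lambda>_. S). \<Sum>m\<in>I. \<Sum>m'\<in>I. Wt I ls * (e (ls m) * e (ls m')))"
      proof (rule sum.cong[OF refl])
        fix ls
        show "Wt I ls * (Dl I ls y - mu)\<^sup>2 = (\<Sum>m\<in>I. \<Sum>m'\<in>I. Wt I ls * (e (ls m) * e (ls m')))"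
          unfolding Dle power2_eq_square sum_product by (simp only: sum_distrib_left)
      qed
      also have "\<dots> = (\<Sum>m\<in>I. \<Sum>m'\<in>I. \<Sum>ls\<in>PiE I (\<lambda>_. S). Wt I ls * (e (ls m) * e (ls m')))"
        by (subst sum.swap, rule sum.cong[OF refl], rule sum.swap)
      finally show ?thesis .
    qed
    also have "\<dots> = (\<Sum>m\<in>I. \<Sum>m'\<in>I. if m = m' then (\<Sum>s\<in>S. \<alpha> s * (e s * e s)) else 0)"
    proof (intro sum.cong refl)
      fix m m' assume m: "m \<in> I" and m': "m' \<in> I"
      show "(\<Sum>ls\<in>PiE I (\<lambda>_. S). Wt I ls * (e (ls m) * e (ls m'))) = (if m = m' then (\<Sum>s\<in>S. \<alpha> s * (e s * e s)) else 0)"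
      proof (cases "m = m'")
        case True then show ?thesis using D2[OF I(1) m, of "\<lambda>s. e s * e s"] by simp
      next
        case False then show ?thesis using D3[OF I(1) m m' False, of e e] ae0 by simp
      qed
    qed
    also have "\<dots> = N * (\<Sum>s\<in>S. \<alpha> s * (e s * e s))"
      using I by (simp add: N_def)
    also have "\<dots> \<le> N * (\<Sum>s\<in>S. \<alpha> s * Cp\<^sup>2)"
    proof (rule mult_left_mono[OF sum_mono])
      fix s assume s: "s \<in> S"
      have "\<bar>e s\<bar> \<le> \<bar>Cp\<bar>" using q_lo[OF s y] q_hi[OF s y] mix_lo[OF y] mix_hi[OF y] Cm_pos
        unfolding e_def abs_le_iff by linarith
      then have "(e s)\<^sup>2 \<le> Cp\<^sup>2"
        using abs_le_square_iff by blast
      then have "e s * e s \<le> Cp\<^sup>2" by (simp add: power2_eq_square)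
      then show "\<alpha> s * (e s * e s) \<le> \<alpha> s * Cp\<^sup>2" using \<alpha>_nonneg s by (intro mult_left_mono) auto
    qed (use N1 in simp)
    also have "\<dots> = N * Cp\<^sup>2" using \<alpha>_sum by (simp add: sum_distrib_right[symmetric])
    finally show ?thesis .
  qed
  have "(\<Sum>ls\<in>PiE I (\<lambda>_. S). Wt I ls / Dl I ls y)
      \<le> (\<Sum>ls\<in>PiE I (\<lambda>_. S). Wt I ls * (1 / mu - (Dl I ls y - mu) / mu\<^sup>2 + (Dl I ls y - mu)\<^sup>2 / (mu\<^sup>2 * (N * Cm))))"
  proof (rule sum_mono)
    fix ls assume ls: "ls \<in> PiE I (\<lambda>_. S)"
    have "Wt I ls / Dl I ls y = Wt I ls * (1 / Dl I ls y)" by simp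
    also have "\<dots> \<le> Wt I ls * (1 / mu - (Dl I ls y - mu) / mu\<^sup>2 + (Dl I ls y - mu)\<^sup>2 / (mu\<^sup>2 * (N * Cm)))"
      by (rule mult_left_mono[OF pt[OF ls] W0[OF ls]])
    finally show "Wt I ls / Dl I ls y \<le> Wt I ls * (1 / mu - (Dl I ls y - mu) / mu\<^sup>2 + (Dl I ls y - mu)\<^sup>2 / (mu\<^sup>2 * (N * Cm)))" .
  qed
  also have "\<dots> = (\<Sum>ls\<in>PiE I (\<lambda>_. S). Wt I ls) / mu - (\<Sum>ls\<in>PiE I (\<lambda>_. S). Wt I ls * (Dl I ls y - mu)) / mu\<^sup>2
       + (\<Sum>ls\<in>PiE I (\<lambda>_. S). Wt I ls * (Dl I ls y - mu)\<^sup>2) / (mu\<^sup>2 * (N * Cm))"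
  proof -
    have "Wt I ls * (1 / mu - (Dl I ls y - mu) / mu\<^sup>2 + (Dl I ls y - mu)\<^sup>2 / (mu\<^sup>2 * (N * Cm)))
       = Wt I ls / mu - Wt I ls * (Dl I ls y - mu) / mu\<^sup>2 + Wt I ls * (Dl I ls y - mu)\<^sup>2 / (mu\<^sup>2 * (N * Cm))" for ls
      by (simp add: ring_distribs)
    then show ?thesis by (simp only: sum.distrib sum_subtractf sum_divide_distrib)
  qed
  also have "\<dots> \<le> 1 / mu + N * Cp\<^sup>2 / (mu\<^sup>2 * (N * Cm))"
  proof -
    have "(\<Sum>ls\<in>PiE I (\<lambda>_. S). Wt I ls * (Dl I ls y - mu)\<^sup>2) / (mu\<^sup>2 * (N * Cm)) \<le> N * Cp\<^sup>2 / (mu\<^sup>2 * (N * Cm))"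
      using mu0 Cmp by (intro divide_right_mono[OF s2]) simp
    then show ?thesis using s0 D1[OF I(1)] by simp
  qed
  also have "N * Cp\<^sup>2 / (mu\<^sup>2 * (N * Cm)) \<le> Cp\<^sup>2 / (Cm^3 * N\<^sup>2)"
  proof -
    have "N * Cp\<^sup>2 / (mu\<^sup>2 * (N * Cm)) = Cp\<^sup>2 / (mu\<^sup>2 * Cm)" using N1 by simp
    also have "\<dots> \<le> Cp\<^sup>2 / ((N * Cm)\<^sup>2 * Cm)"
      using mup Cmp Cm_pos by (intro divide_left_mono mult_right_mono power_mono mult_pos_pos) auto
    also have "\<dots> = Cp\<^sup>2 / (Cm^3 * N\<^sup>2)" by (simp add: power2_eq_square power3_eq_cube mult_ac)
    finally show ?thesis .
  qed
  finally show ?thesis by (simp add: mu_def N_def)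
qed
lemma UB:
  fixes p d qq :: real
  assumes "0 \<le> p" "Cm \<le> d" "0 \<le> qq" "qq \<le> Cp"
  shows "qq * (p / d) \<le> Cp / Cm * p" "qq * (p / d)\<^sup>2 \<le> Cp / Cm\<^sup>2 * p\<^sup>2"
proof -
  have d0: "0 < d" using assms Cm_pos by linarith
  have a: "p / d \<le> p / Cm" using assms Cm_pos by (intro divide_left_mono) auto
  have "qq * (p / d) \<le> Cp * (p / Cm)" using assms a d0 by (intro mult_mono) auto
  then show "qq * (p / d) \<le> Cp / Cm * p" by simp
  have "(p / d)\<^sup>2 \<le> (p / Cm)\<^sup>2" using a assms d0 by (intro power_mono) auto
  then have "qq * (p / d)\<^sup>2 \<le> Cp * (p / Cm)\<^sup>2" using assms by (intro mult_mono) auto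
  then show "qq * (p / d)\<^sup>2 \<le> Cp / Cm\<^sup>2 * p\<^sup>2" by (simp add: power_divide)
qed

lemma int_bound:
  fixes g h :: "'a \<Rightarrow> real"
  assumes "integrable M h" "g \<in> borel_measurable M" "\<And>y. y \<in> space M \<Longrightarrow> \<bar>g y\<bar> \<le> h y"
  shows "integrable M g"
  by (rule Bochner_Integration.integrable_bound[OF assms(1,2)]) (use assms(3) in \<open>auto intro!: AE_I2 order.trans[OF _ abs_ge_self]\<close>)

lemma u_nonneg: "(\<And>y. y \<in> space M \<Longrightarrow> Cm \<le> d y) \<Longrightarrow> y \<in> space M \<Longrightarrow> 0 \<le> pt y / d y"
  using pt_nonneg Cm_pos by (meson divide_nonneg_pos less_le_trans)

lemma GOODU:
  assumes dm[measurable]: "d \<in> borel_measurable M" and dl: "\<And>y. y \<in> space M \<Longrightarrow> Cm \<le> d y" and s: "s \<in> S"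
  shows "(\<lambda>y. pt y / d y) \<in> borel_measurable M"
    and "\<And>y. y \<in> space M \<Longrightarrow> 0 \<le> pt y / d y"
    and "integrable M (\<lambda>y. q s y * (pt y / d y))"
    and "integrable M (\<lambda>y. (pt y)\<^sup>2) \<Longrightarrow> integrable M (\<lambda>y. q s y * (pt y / d y)\<^sup>2)"
proof -
  have [measurable]: "q s \<in> borel_measurable M" using s by simp
  show "(\<lambda>y. pt y / d y) \<in> borel_measurable M" by measurable
  show "\<And>y. y \<in> space M \<Longrightarrow> 0 \<le> pt y / d y"
    using pt_nonneg dl Cm_pos by (meson divide_nonneg_pos less_le_trans)
  have n: "y \<in> space M \<Longrightarrow> 0 \<le> q s y * (pt y / d y)" for y
    using pt_nonneg dl Cm_pos q_nonneg[OF s] by (meson divide_nonneg_pos less_le_trans mult_nonneg_nonneg)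
  show "integrable M (\<lambda>y. q s y * (pt y / d y))"
  proof (rule int_bound[OF integrable_mult_right[OF pt_int, of "Cp / Cm"]])
    fix y assume y: "y \<in> space M"
    show "\<bar>q s y * (pt y / d y)\<bar> \<le> Cp / Cm * pt y"
      using n[OF y] UB(1)[of "pt y" "d y" "q s y"] pt_nonneg dl[OF y] q_nonneg[OF s y] q_hi[OF s y] y
      by simp
  qed simp
  assume p2: "integrable M (\<lambda>y. (pt y)\<^sup>2)"
  have n2: "y \<in> space M \<Longrightarrow> 0 \<le> q s y * (pt y / d y)\<^sup>2" for y
    using q_nonneg[OF s] by simp
  show "integrable M (\<lambda>y. q s y * (pt y / d y)\<^sup>2)"
  proof (rule int_bound[OF integrable_mult_right[OF p2, of "Cp / Cm\<^sup>2"]])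
    fix y assume y: "y \<in> space M"
    show "\<bar>q s y * (pt y / d y)\<^sup>2\<bar> \<le> Cp / Cm\<^sup>2 * (pt y)\<^sup>2"
      using n2[OF y] UB(2)[of "pt y" "d y" "q s y"] pt_nonneg dl[OF y] q_nonneg[OF s y] q_hi[OF s y] y
      by (simp only: abs_of_nonneg)
  qed simp
qed

lemma fstc_meas: "n \<in> I \<Longrightarrow> (\<lambda>w. fst (w n)) \<in> measurable (PiM I (\<lambda>_. Q)) M"
proof -
  assume n: "n \<in> I"
  have "fst \<in> measurable Q M" unfolding measurable_Q1 by (rule measurable_fst)
  then show ?thesis by (rule measurable_compose[OF measurable_component_singleton[OF n]])
qed

lemma sndc_meas: "n \<in> I \<Longrightarrow> (\<lambda>w. snd (w n)) \<in> measurable (PiM I (\<lambda>_. Q)) C"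
proof -
  assume n: "n \<in> I"
  have "snd \<in> measurable Q C" unfolding measurable_Q1 by (rule measurable_snd)
  then show ?thesis by (rule measurable_compose[OF measurable_component_singleton[OF n]])
qed

lemma qc_meas: "n \<in> I \<Longrightarrow> m \<in> I \<Longrightarrow> (\<lambda>w. q (snd (w m)) (fst (w n))) \<in> borel_measurable (PiM I (\<lambda>_. Q))"
  by (rule measurable_compose_countable'[where I=S and g="\<lambda>w. snd (w m)" and f="\<lambda>k w. q k (fst (w n))"])
     (auto intro: measurable_compose[OF fstc_meas] sndc_meas)

lemma BH_meas: "Z_BH pt q N \<in> borel_measurable (PiM {1..N} (\<lambda>_. Q))"
  unfolding Z_BH_def
  by (intro borel_measurable_sum borel_measurable_divide measurable_compose[OF fstc_meas pt_meas] qc_meas) auto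

lemma RB_meas: "Z_RB pt q \<alpha> K N \<in> borel_measurable (PiM {1..N} (\<lambda>_. Q))"
  unfolding Z_RB_def
  by (intro borel_measurable_times borel_measurable_const borel_measurable_sum borel_measurable_divide
        measurable_compose[OF fstc_meas pt_meas] measurable_compose[OF fstc_meas q_meas]) auto

lemma R1: "Z_BH pt q N (\<lambda>n\<in>{1..N}. (x n, ls n)) = (\<Sum>n\<in>{1..N}. pt (x n) / Dl {1..N} ls (x n))"
  unfolding Z_BH_def Dl_def by (intro sum.cong refl) auto

lemma R2: "Z_RB pt q \<alpha> K N (\<lambda>n\<in>{1..N}. (x n, ls n)) = (\<Sum>n\<in>{1..N}. pt (x n) / (real N * mix (x n)))"
  unfolding Z_RB_def mix_def by (simp add: sum_divide_distrib ac_simps)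

lemma K1: "1 \<in> S" using K_pos by simp

lemma Dl_meas: "ls \<in> PiE I (\<lambda>_. S) \<Longrightarrow> Dl I ls \<in> borel_measurable M"
proof -
  assume ls: "ls \<in> PiE I (\<lambda>_. S)"
  have "(\<lambda>y. \<Sum>m\<in>I. q (ls m) y) \<in> borel_measurable M"
    by (intro borel_measurable_sum q_meas) (use ls in auto)
  then show ?thesis by (simp add: Dl_def[abs_def])
qed

lemma Dl_ge: "1 \<le> N \<Longrightarrow> ls \<in> PiE {1..N} (\<lambda>_. S) \<Longrightarrow> y \<in> space M \<Longrightarrow> Cm \<le> Dl {1..N} ls y"
proof -
  assume a: "1 \<le> N" "ls \<in> PiE {1..N} (\<lambda>_. S)" "y \<in> space M"
  have "1 * Cm \<le> real N * Cm" using a(1) Cm_pos by (intro mult_right_mono) auto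
  then show ?thesis using Dl_lo[OF _ a(2,3)] by simp
qed

lemma mix_meas: "mix \<in> borel_measurable M"
proof -
  have "(\<lambda>y. \<Sum>k\<in>S. \<alpha> k * q k y) \<in> borel_measurable M"
    by (intro borel_measurable_sum borel_measurable_times borel_measurable_const q_meas) auto
  then show ?thesis by (simp add: mix_def[abs_def])
qed

lemma Nmix_meas: "(\<lambda>y. real N * mix y) \<in> borel_measurable M"
  using mix_meas by simp

lemma Nmix_ge: "1 \<le> N \<Longrightarrow> y \<in> space M \<Longrightarrow> Cm \<le> real N * mix y"
proof -
  assume a: "1 \<le> N" "y \<in> space M"
  have "1 * Cm \<le> real N * mix y" using a mix_lo[OF a(2)] Cm_pos by (intro mult_mono) auto
  then show ?thesis by simp
qed

lemma ennreal_BH_meas: "(\<lambda>w. ennreal (f (Z_BH pt q N w))) \<in> borel_measurable (PiM {1..N} (\<lambda>_. Q))"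
  if "f \<in> borel_measurable borel" for f
  using measurable_compose[OF measurable_compose[OF BH_meas that] measurable_ennreal] .

lemma ennreal_RB_meas: "(\<lambda>w. ennreal (f (Z_RB pt q \<alpha> K N w))) \<in> borel_measurable (PiM {1..N} (\<lambda>_. Q))"
  if "f \<in> borel_measurable borel" for f
  using measurable_compose[OF measurable_compose[OF RB_meas that] measurable_ennreal] .

lemma EB1:
  assumes N: "1 \<le> N"
  shows "(\<integral>\<^sup>+w. ennreal (Z_BH pt q N w) \<partial>PiM {1..N} (\<lambda>_. Q)) = ennreal (\<integral>x. pt x \<partial>M)"
proof -
  let ?I = "{1..N}"
  have "(\<integral>\<^sup>+w. ennreal (Z_BH pt q N w) \<partial>PiM ?I (\<lambda>_. Q))
     = (\<Sum>ls\<in>PiE ?I (\<lambda>_. S). \<integral>\<^sup>+x. (\<Prod>n\<in>?I. fd (x n, ls n)) * ennreal (Z_BH pt q N (\<lambda>n\<in>?I. (x n, ls n))) \<partial>PiM ?I (\<lambda>_. M))"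
    by (rule LAB) (use ennreal_BH_meas[of "\<lambda>x. x"] in simp_all)
  also have "\<dots> = (\<Sum>ls\<in>PiE ?I (\<lambda>_. S). ennreal (Wt ?I ls * (\<Sum>n\<in>?I. \<integral>y. q (ls n) y * (pt y / Dl ?I ls y) \<partial>M)))"
    unfolding R1
    by (intro sum.cong refl GEN1 GOODU[OF Dl_meas Dl_ge[OF N]]) (auto simp: K_pos)
  also have "\<dots> = (\<Sum>ls\<in>PiE ?I (\<lambda>_. S). ennreal (Wt ?I ls * (\<integral>x. pt x \<partial>M)))"
  proof (intro sum.cong refl arg_cong[where f=ennreal] arg_cong[where f="\<lambda>z. Wt ?I ls * z" for ls])
    fix ls assume ls: "ls \<in> PiE ?I (\<lambda>_. S)"
    have "(\<Sum>n\<in>?I. \<integral>y. q (ls n) y * (pt y / Dl ?I ls y) \<partial>M) = (\<integral>y. (\<Sum>n\<in>?I. q (ls n) y * (pt y / Dl ?I ls y)) \<partial>M)"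
    proof -
      have int: "integrable M (\<lambda>y. q s y * (pt y / Dl ?I ls y))" if s: "s \<in> S" for s
        using GOODU(3)[OF Dl_meas[OF ls], of s] Dl_ge[OF N ls] s by blast
      have "(\<integral>y. (\<Sum>n\<in>?I. q (ls n) y * (pt y / Dl ?I ls y)) \<partial>M) = (\<Sum>n\<in>?I. \<integral>y. q (ls n) y * (pt y / Dl ?I ls y) \<partial>M)"
      proof (rule Bochner_Integration.integral_sum)
        fix n assume "n \<in> ?I"
        from int[OF PiE_mem[OF ls this]] show "integrable M (\<lambda>y. q (ls n) y * (pt y / Dl ?I ls y))" .
      qed
      then show ?thesis by simp
    qed
    also have "\<dots> = (\<integral>y. pt y \<partial>M)"
    proof (rule Bochner_Integration.integral_cong[OF refl])
      fix y assume y: "y \<in> space M"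
      have pos: "0 < Dl ?I ls y" using Dl_ge[OF N ls y] Cm_pos by linarith
      have "(\<Sum>n\<in>?I. q (ls n) y * (pt y / Dl ?I ls y)) = (\<Sum>n\<in>?I. q (ls n) y) * (pt y / Dl ?I ls y)"
        by (rule sum_distrib_right[symmetric])
      also have "\<dots> = Dl ?I ls y * (pt y / Dl ?I ls y)" by (simp only: Dl_def)
      also have "\<dots> = pt y" using pos by simp
      finally show "(\<Sum>n\<in>?I. q (ls n) y * (pt y / Dl ?I ls y)) = pt y" .
    qed
    finally show "(\<Sum>n\<in>?I. \<integral>y. q (ls n) y * (pt y / Dl ?I ls y) \<partial>M) = (\<integral>y. pt y \<partial>M)" .
  qed
  also have "\<dots> = ennreal (\<Sum>ls\<in>PiE ?I (\<lambda>_. S). Wt ?I ls * (\<integral>x. pt x \<partial>M))"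
  proof (rule sum_ennreal)
    fix ls assume ls: "ls \<in> PiE ?I (\<lambda>_. S)"
    have "0 \<le> Wt ?I ls" using ls \<alpha>_nonneg by (auto simp: Wt_def intro!: prod_nonneg)
    then show "0 \<le> Wt ?I ls * (\<integral>x. pt x \<partial>M)" using Z_pos by simp
  qed
  also have "(\<Sum>ls\<in>PiE ?I (\<lambda>_. S). Wt ?I ls * (\<integral>x. pt x \<partial>M)) = (\<integral>x. pt x \<partial>M)"
    by (simp only: sum_distrib_right[symmetric] D1[of ?I] finite_atLeastAtMost mult_1)
  finally show ?thesis .
qed

lemma ER1:
  assumes N: "1 \<le> N"
  shows "(\<integral>\<^sup>+w. ennreal (Z_RB pt q \<alpha> K N w) \<partial>PiM {1..N} (\<lambda>_. Q)) = ennreal (\<integral>x. pt x \<partial>M)"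
proof -
  let ?I = "{1..N}"
  have "(\<integral>\<^sup>+w. ennreal (Z_RB pt q \<alpha> K N w) \<partial>PiM ?I (\<lambda>_. Q))
     = (\<Sum>ls\<in>PiE ?I (\<lambda>_. S). \<integral>\<^sup>+x. (\<Prod>n\<in>?I. fd (x n, ls n)) * ennreal (Z_RB pt q \<alpha> K N (\<lambda>n\<in>?I. (x n, ls n))) \<partial>PiM ?I (\<lambda>_. M))"
    by (rule LAB) (use ennreal_RB_meas[of "\<lambda>x. x"] in simp_all)
  also have "\<dots> = (\<Sum>ls\<in>PiE ?I (\<lambda>_. S). ennreal (Wt ?I ls * (\<Sum>n\<in>?I. \<integral>y. q (ls n) y * (pt y / (real N * mix y)) \<partial>M)))"
    unfolding R2
    by (intro sum.cong refl GEN1 GOODU[OF Nmix_meas Nmix_ge[OF N]]) (auto simp: K_pos)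
  also have "\<dots> = ennreal (\<Sum>ls\<in>PiE ?I (\<lambda>_. S). Wt ?I ls * (\<Sum>n\<in>?I. \<integral>y. q (ls n) y * (pt y / (real N * mix y)) \<partial>M))"
  proof (intro sum_ennreal mult_nonneg_nonneg sum_nonneg integral_nonneg_AE AE_I2)
    fix ls assume ls: "ls \<in> PiE ?I (\<lambda>_. S)"
    show "0 \<le> Wt ?I ls" using ls \<alpha>_nonneg by (auto simp: Wt_def intro!: prod_nonneg)
  next
    fix ls n y assume ls: "ls \<in> PiE ?I (\<lambda>_. S)" and n: "n \<in> ?I" and y: "y \<in> space M"
    show "0 \<le> q (ls n) y" by (rule q_nonneg[OF PiE_mem[OF ls n] y])
  next
    fix ls n y assume ls: "ls \<in> PiE ?I (\<lambda>_. S)" and n: "n \<in> ?I" and y: "y \<in> space M"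
    show "0 \<le> pt y / (real N * mix y)" by (rule u_nonneg[OF Nmix_ge[OF N] y])
  qed
  also have "(\<Sum>ls\<in>PiE ?I (\<lambda>_. S). Wt ?I ls * (\<Sum>n\<in>?I. \<integral>y. q (ls n) y * (pt y / (real N * mix y)) \<partial>M))
     = (\<Sum>n\<in>?I. \<Sum>s\<in>S. \<alpha> s * (\<integral>y. q s y * (pt y / (real N * mix y)) \<partial>M))"
  proof -
    define c where "c s = (\<integral>y. q s y * (pt y / (real N * mix y)) \<partial>M)" for s
    have "(\<Sum>ls\<in>PiE ?I (\<lambda>_. S). Wt ?I ls * (\<Sum>n\<in>?I. c (ls n))) = (\<Sum>n\<in>?I. \<Sum>ls\<in>PiE ?I (\<lambda>_. S). Wt ?I ls * c (ls n))"
      by (simp only: sum_distrib_left) (rule sum.swap)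
    also have "\<dots> = (\<Sum>n\<in>?I. \<Sum>s\<in>S. \<alpha> s * c s)"
      by (intro sum.cong refl D2) auto
    finally show ?thesis by (simp only: c_def)
  qed
  also have "\<dots> = (\<Sum>n\<in>?I. (\<integral>x. pt x \<partial>M) / real N)"
  proof (rule sum.cong[OF refl])
    fix n
    have "(\<Sum>s\<in>S. \<alpha> s * (\<integral>y. q s y * (pt y / (real N * mix y)) \<partial>M)) = (\<integral>y. (\<Sum>s\<in>S. \<alpha> s * (q s y * (pt y / (real N * mix y)))) \<partial>M)"
    proof -
      have int: "integrable M (\<lambda>y. \<alpha> s * (q s y * (pt y / (real N * mix y))))" if s: "s \<in> S" for s
      proof (rule integrable_mult_right)
        show "integrable M (\<lambda>y. q s y * (pt y / (real N * mix y)))"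
          by (rule GOODU(3)[OF Nmix_meas _ s]) (rule Nmix_ge[OF N])
      qed
      have "(\<integral>y. (\<Sum>s\<in>S. \<alpha> s * (q s y * (pt y / (real N * mix y)))) \<partial>M) = (\<Sum>s\<in>S. \<integral>y. \<alpha> s * (q s y * (pt y / (real N * mix y))) \<partial>M)"
        by (rule Bochner_Integration.integral_sum) (rule int)
      also have "\<dots> = (\<Sum>s\<in>S. \<alpha> s * (\<integral>y. q s y * (pt y / (real N * mix y)) \<partial>M))"
        by (simp only: integral_mult_right_zero)
      finally show ?thesis by (rule sym)
    qed
    also have "\<dots> = (\<integral>y. pt y / real N \<partial>M)"
    proof (rule Bochner_Integration.integral_cong[OF refl])
      fix y assume y: "y \<in> space M"
      have pos: "0 < mix y" using mix_lo[OF y] Cm_pos by linarith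
      have "(\<Sum>s\<in>S. \<alpha> s * (q s y * (pt y / (real N * mix y)))) = (\<Sum>s\<in>S. \<alpha> s * q s y) * (pt y / (real N * mix y))"
        by (simp only: sum_distrib_right mult.assoc)
      also have "\<dots> = mix y * (pt y / (real N * mix y))" by (simp only: mix_def)
      also have "\<dots> = pt y / real N" using pos N by simp
      finally show "(\<Sum>s\<in>S. \<alpha> s * (q s y * (pt y / (real N * mix y)))) = pt y / real N" .
    qed
    finally show "(\<Sum>s\<in>S. \<alpha> s * (\<integral>y. q s y * (pt y / (real N * mix y)) \<partial>M)) = (\<integral>x. pt x \<partial>M) / real N"
      by (simp only: integral_divide_zero)
  qed
  also have "(\<Sum>n\<in>?I. (\<integral>x. pt x \<partial>M) / real N) = (\<integral>x. pt x \<partial>M)"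
    using N by simp
  finally show ?thesis .
qed

lemma ALG:
  fixes a B :: "nat \<Rightarrow> real"
  assumes "finite I"
  shows "(\<Sum>n\<in>I. \<Sum>n'\<in>I. if n = n' then B n else a n * a n') = (\<Sum>n\<in>I. B n) + (\<Sum>n\<in>I. a n)\<^sup>2 - (\<Sum>n\<in>I. (a n)\<^sup>2)"
proof -
  have "(\<Sum>n'\<in>I. if n = n' then B n else a n * a n') = (\<Sum>n'\<in>I. a n * a n') + (B n - a n * a n)" if n: "n \<in> I" for n
  proof -
    have "(\<Sum>n'\<in>I. if n = n' then B n else a n * a n') = (\<Sum>n'\<in>I. a n * a n' + (if n = n' then B n - a n * a n else 0))"
      by (rule sum.cong) auto
    also have "\<dots> = (\<Sum>n'\<in>I. a n * a n') + (B n - a n * a n)"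
      using assms n by (simp add: sum.distrib)
    finally show ?thesis .
  qed
  then have "(\<Sum>n\<in>I. \<Sum>n'\<in>I. if n = n' then B n else a n * a n') = (\<Sum>n\<in>I. (\<Sum>n'\<in>I. a n * a n') + (B n - a n * a n))"
    by (rule sum.cong[OF refl])
  also have "\<dots> = (\<Sum>n\<in>I. \<Sum>n'\<in>I. a n * a n') + (\<Sum>n\<in>I. B n) - (\<Sum>n\<in>I. a n * a n)"
    by (simp add: sum.distrib sum_subtractf)
  also have "(\<Sum>n\<in>I. \<Sum>n'\<in>I. a n * a n') = (\<Sum>n\<in>I. a n)\<^sup>2"
    by (simp add: power2_eq_square sum_product)
  finally show ?thesis by (simp add: power2_eq_square)
qed

lemma ALG2:
  fixes X Y :: real and I :: "nat set"
  assumes "finite I"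
  shows "(\<Sum>n\<in>I. \<Sum>n'\<in>I. if n = n' then X else Y) = real (card I) * X + (real (card I) * real (card I) - real (card I)) * Y"
proof -
  have "(\<Sum>n'\<in>I. if n = n' then X else Y) = (\<Sum>n'\<in>I. Y + (if n = n' then X - Y else 0))" for n
    by (rule sum.cong) auto
  also have "\<dots> n = real (card I) * Y + (X - Y)" if "n \<in> I" for n
    using assms that by (simp add: sum.distrib)
  finally have "(\<Sum>n\<in>I. \<Sum>n'\<in>I. if n = n' then X else Y) = (\<Sum>n\<in>I. real (card I) * Y + (X - Y))"
    by (intro sum.cong refl) simp
  also have "\<dots> = real (card I) * X + (real (card I) * real (card I) - real (card I)) * Y"
    by (simp add: algebra_simps)
  finally show ?thesis .
qed

lemma SUMA:
  assumes N: "1 \<le> N" and ls: "ls \<in> PiE {1..N} (\<lambda>_. S)"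
  shows "(\<Sum>n\<in>{1..N}. \<integral>y. q (ls n) y * (pt y / Dl {1..N} ls y) \<partial>M) = (\<integral>y. pt y \<partial>M)"
proof -
  let ?I = "{1..N}"
  have int: "integrable M (\<lambda>y. q s y * (pt y / Dl ?I ls y))" if s: "s \<in> S" for s
    by (rule GOODU(3)[OF Dl_meas[OF ls] _ s]) (rule Dl_ge[OF N ls])
  have "(\<integral>y. (\<Sum>n\<in>?I. q (ls n) y * (pt y / Dl ?I ls y)) \<partial>M) = (\<Sum>n\<in>?I. \<integral>y. q (ls n) y * (pt y / Dl ?I ls y) \<partial>M)"
  proof (rule Bochner_Integration.integral_sum)
    fix n assume "n \<in> ?I"
    from int[OF PiE_mem[OF ls this]] show "integrable M (\<lambda>y. q (ls n) y * (pt y / Dl ?I ls y))" .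
  qed
  moreover have "(\<integral>y. (\<Sum>n\<in>?I. q (ls n) y * (pt y / Dl ?I ls y)) \<partial>M) = (\<integral>y. pt y \<partial>M)"
  proof (rule Bochner_Integration.integral_cong[OF refl])
    fix y assume y: "y \<in> space M"
    have pos: "0 < Dl ?I ls y" using Dl_ge[OF N ls y] Cm_pos by linarith
    have "(\<Sum>n\<in>?I. q (ls n) y * (pt y / Dl ?I ls y)) = (\<Sum>n\<in>?I. q (ls n) y) * (pt y / Dl ?I ls y)"
      by (rule sum_distrib_right[symmetric])
    also have "\<dots> = Dl ?I ls y * (pt y / Dl ?I ls y)" by (simp only: Dl_def)
    also have "\<dots> = pt y" using pos by simp
    finally show "(\<Sum>n\<in>?I. q (ls n) y * (pt y / Dl ?I ls y)) = pt y" .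
  qed
  ultimately show ?thesis by simp
qed

lemma SUMB:
  assumes N: "1 \<le> N" and ls: "ls \<in> PiE {1..N} (\<lambda>_. S)" and p2: "integrable M (\<lambda>y. (pt y)\<^sup>2)"
  shows "(\<Sum>n\<in>{1..N}. \<integral>y. q (ls n) y * (pt y / Dl {1..N} ls y)\<^sup>2 \<partial>M) = (\<integral>y. (pt y)\<^sup>2 / Dl {1..N} ls y \<partial>M)"
proof -
  let ?I = "{1..N}"
  have int: "integrable M (\<lambda>y. q s y * (pt y / Dl ?I ls y)\<^sup>2)" if s: "s \<in> S" for s
    by (rule GOODU(4)[OF Dl_meas[OF ls] _ s p2]) (rule Dl_ge[OF N ls])
  have "(\<integral>y. (\<Sum>n\<in>?I. q (ls n) y * (pt y / Dl ?I ls y)\<^sup>2) \<partial>M) = (\<Sum>n\<in>?I. \<integral>y. q (ls n) y * (pt y / Dl ?I ls y)\<^sup>2 \<partial>M)"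
  proof (rule Bochner_Integration.integral_sum)
    fix n assume "n \<in> ?I"
    from int[OF PiE_mem[OF ls this]] show "integrable M (\<lambda>y. q (ls n) y * (pt y / Dl ?I ls y)\<^sup>2)" .
  qed
  moreover have "(\<integral>y. (\<Sum>n\<in>?I. q (ls n) y * (pt y / Dl ?I ls y)\<^sup>2) \<partial>M) = (\<integral>y. (pt y)\<^sup>2 / Dl ?I ls y \<partial>M)"
  proof (rule Bochner_Integration.integral_cong[OF refl])
    fix y assume y: "y \<in> space M"
    have pos: "0 < Dl ?I ls y" using Dl_ge[OF N ls y] Cm_pos by linarith
    have "(\<Sum>n\<in>?I. q (ls n) y * (pt y / Dl ?I ls y)\<^sup>2) = (\<Sum>n\<in>?I. q (ls n) y) * (pt y / Dl ?I ls y)\<^sup>2"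
      by (rule sum_distrib_right[symmetric])
    also have "\<dots> = Dl ?I ls y * (pt y / Dl ?I ls y)\<^sup>2" by (simp only: Dl_def)
    also have "\<dots> = (pt y)\<^sup>2 / Dl ?I ls y" using pos by (simp add: power2_eq_square)
    finally show "(\<Sum>n\<in>?I. q (ls n) y * (pt y / Dl ?I ls y)\<^sup>2) = (pt y)\<^sup>2 / Dl ?I ls y" .
  qed
  ultimately show ?thesis by simp
qed

lemma INT2:
  assumes p2: "integrable M (\<lambda>y. (pt y)\<^sup>2)" and dm[measurable]: "d \<in> borel_measurable M"
    and dl: "\<And>y. y \<in> space M \<Longrightarrow> Cm \<le> d y"
  shows "integrable M (\<lambda>y. (pt y)\<^sup>2 / d y)"
proof (rule int_bound[OF integrable_divide[OF p2, of Cm]])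
  fix y assume y: "y \<in> space M"
  have d0: "0 < d y" using dl[OF y] Cm_pos by linarith
  have "(pt y)\<^sup>2 / d y \<le> (pt y)\<^sup>2 / Cm" using dl[OF y] Cm_pos by (intro divide_left_mono) auto
  then show "\<bar>(pt y)\<^sup>2 / d y\<bar> \<le> (pt y)\<^sup>2 / Cm" using d0 by simp
qed simp

lemma EB2:
  assumes N: "1 \<le> N" and p2: "integrable M (\<lambda>y. (pt y)\<^sup>2)"
  shows "\<exists>VB. (\<integral>\<^sup>+w. ennreal ((Z_BH pt q N w)\<^sup>2) \<partial>PiM {1..N} (\<lambda>_. Q)) = ennreal VB \<and> 0 \<le> VB \<and>
     VB \<le> (\<integral>x. pt x \<partial>M)\<^sup>2 - (\<integral>x. pt x \<partial>M)\<^sup>2 / real N + (\<integral>y. (pt y)\<^sup>2 / (real N * mix y) \<partial>M)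
           + Cp\<^sup>2 / (Cm^3 * (real N)\<^sup>2) * (\<integral>y. (pt y)\<^sup>2 \<partial>M)"
proof -
  let ?I = "{1..N}"
  define Z where "Z = (\<integral>x. pt x \<partial>M)"
  define u where "u ls y = pt y / Dl ?I ls y" for ls y
  define TT where "TT ls = (\<Sum>n\<in>?I. \<Sum>n'\<in>?I. if n = n' then \<integral>y. q (ls n) y * (u ls y)\<^sup>2 \<partial>M
      else (\<integral>y. q (ls n) y * u ls y \<partial>M) * (\<integral>y. q (ls n') y * u ls y \<partial>M))" for ls
  define C where "C = Cp\<^sup>2 / (Cm^3 * (real N)\<^sup>2)"
  have W0: "0 \<le> Wt ?I ls" if ls: "ls \<in> PiE ?I (\<lambda>_. S)" for ls
    using ls \<alpha>_nonneg by (auto simp: Wt_def intro!: prod_nonneg)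
  have un: "0 \<le> u ls y" if ls: "ls \<in> PiE ?I (\<lambda>_. S)" and y: "y \<in> space M" for ls y
    unfolding u_def by (rule u_nonneg[OF Dl_ge[OF N ls] y])
  have TT0: "0 \<le> TT ls" if ls: "ls \<in> PiE ?I (\<lambda>_. S)" for ls
    unfolding TT_def
  proof (intro sum_nonneg)
    fix n n' assume n: "n \<in> ?I" and n': "n' \<in> ?I"
    have a: "0 \<le> (\<integral>y. q (ls m) y * u ls y \<partial>M)" if "m \<in> ?I" for m
      using q_nonneg[OF PiE_mem[OF ls that]] un[OF ls] by (intro integral_nonneg_AE AE_I2 mult_nonneg_nonneg) auto
    have b: "0 \<le> (\<integral>y. q (ls n) y * (u ls y)\<^sup>2 \<partial>M)"
      using q_nonneg[OF PiE_mem[OF ls n]] by (intro integral_nonneg_AE AE_I2 mult_nonneg_nonneg) auto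
    show "0 \<le> (if n = n' then \<integral>y. q (ls n) y * (u ls y)\<^sup>2 \<partial>M
      else (\<integral>y. q (ls n) y * u ls y \<partial>M) * (\<integral>y. q (ls n') y * u ls y \<partial>M))"
      using a[OF n] a[OF n'] b by auto
  qed
  have "(\<integral>\<^sup>+w. ennreal ((Z_BH pt q N w)\<^sup>2) \<partial>PiM ?I (\<lambda>_. Q))
     = (\<Sum>ls\<in>PiE ?I (\<lambda>_. S). \<integral>\<^sup>+x. (\<Prod>n\<in>?I. fd (x n, ls n)) * ennreal ((Z_BH pt q N (\<lambda>n\<in>?I. (x n, ls n)))\<^sup>2) \<partial>PiM ?I (\<lambda>_. M))"
    by (rule LAB) (use ennreal_BH_meas[of "\<lambda>x. x\<^sup>2"] in simp_all)
  also have "\<dots> = (\<Sum>ls\<in>PiE ?I (\<lambda>_. S). ennreal (Wt ?I ls * TT ls))"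
  proof (rule sum.cong[OF refl])
    fix ls assume ls: "ls \<in> PiE ?I (\<lambda>_. S)"
    have r: "Z_BH pt q N (\<lambda>n\<in>?I. (x n, ls n)) = (\<Sum>n\<in>?I. u ls (x n))" for x
      by (simp only: R1 u_def)
    have um: "u ls \<in> borel_measurable M"
      unfolding u_def[abs_def] by (rule GOODU(1)[OF Dl_meas[OF ls] _ K1]) (rule Dl_ge[OF N ls])
    show "(\<integral>\<^sup>+x. (\<Prod>n\<in>?I. fd (x n, ls n)) * ennreal ((Z_BH pt q N (\<lambda>n\<in>?I. (x n, ls n)))\<^sup>2) \<partial>PiM ?I (\<lambda>_. M))
        = ennreal (Wt ?I ls * TT ls)"
      unfolding r TT_def
    proof (rule GEN2[OF _ ls um])
      fix y assume "y \<in> space M" then show "0 \<le> u ls y" by (rule un[OF ls])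
    next
      fix s assume s: "s \<in> S"
      show "integrable M (\<lambda>y. q s y * u ls y)"
        unfolding u_def by (rule GOODU(3)[OF Dl_meas[OF ls] _ s]) (rule Dl_ge[OF N ls])
      show "integrable M (\<lambda>y. q s y * (u ls y)\<^sup>2)"
        unfolding u_def by (rule GOODU(4)[OF Dl_meas[OF ls] _ s p2]) (rule Dl_ge[OF N ls])
    qed simp
  qed
  also have "\<dots> = ennreal (\<Sum>ls\<in>PiE ?I (\<lambda>_. S). Wt ?I ls * TT ls)"
    by (rule sum_ennreal) (use W0 TT0 in simp)
  finally have eq: "(\<integral>\<^sup>+w. ennreal ((Z_BH pt q N w)\<^sup>2) \<partial>PiM ?I (\<lambda>_. Q)) = ennreal (\<Sum>ls\<in>PiE ?I (\<lambda>_. S). Wt ?I ls * TT ls)" .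
  have TTb: "TT ls \<le> (\<integral>y. (pt y)\<^sup>2 / Dl ?I ls y \<partial>M) + (Z\<^sup>2 - Z\<^sup>2 / real N)" if ls: "ls \<in> PiE ?I (\<lambda>_. S)" for ls
  proof -
    define a where "a n = (\<integral>y. q (ls n) y * u ls y \<partial>M)" for n
    define B where "B n = (\<integral>y. q (ls n) y * (u ls y)\<^sup>2 \<partial>M)" for n
    have "TT ls = (\<Sum>n\<in>?I. B n) + (\<Sum>n\<in>?I. a n)\<^sup>2 - (\<Sum>n\<in>?I. (a n)\<^sup>2)"
      unfolding TT_def a_def[symmetric] B_def[symmetric] by (rule ALG) simp
    also have "(\<Sum>n\<in>?I. a n) = Z" unfolding a_def u_def Z_def by (rule SUMA[OF N ls])
    also have "(\<Sum>n\<in>?I. B n) = (\<integral>y. (pt y)\<^sup>2 / Dl ?I ls y \<partial>M)" unfolding B_def u_def by (rule SUMB[OF N ls p2])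
    also have "Z\<^sup>2 / real N \<le> (\<Sum>n\<in>?I. (a n)\<^sup>2)"
    proof -
      have "(\<Sum>n\<in>?I. a n)\<^sup>2 \<le> (\<Sum>n\<in>?I. (a n)\<^sup>2) * real (card ?I)" by (rule sum_squared_le_sum_of_squares)
      then have "Z\<^sup>2 \<le> (\<Sum>n\<in>?I. (a n)\<^sup>2) * real N" unfolding a_def u_def Z_def using SUMA[OF N ls] by simp
      then show ?thesis using N by (simp add: divide_le_eq)
    qed
    then have "(\<integral>y. (pt y)\<^sup>2 / Dl ?I ls y \<partial>M) + Z\<^sup>2 - (\<Sum>n\<in>?I. (a n)\<^sup>2) \<le> (\<integral>y. (pt y)\<^sup>2 / Dl ?I ls y \<partial>M) + (Z\<^sup>2 - Z\<^sup>2 / real N)"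
      by simp
    finally show ?thesis .
  qed
  have "(\<Sum>ls\<in>PiE ?I (\<lambda>_. S). Wt ?I ls * TT ls) \<le> (\<Sum>ls\<in>PiE ?I (\<lambda>_. S). Wt ?I ls * ((\<integral>y. (pt y)\<^sup>2 / Dl ?I ls y \<partial>M) + (Z\<^sup>2 - Z\<^sup>2 / real N)))"
    by (rule sum_mono, rule mult_left_mono[OF TTb W0]) 
  also have "\<dots> = (\<Sum>ls\<in>PiE ?I (\<lambda>_. S). Wt ?I ls * (\<integral>y. (pt y)\<^sup>2 / Dl ?I ls y \<partial>M)) + (Z\<^sup>2 - Z\<^sup>2 / real N)"
    by (simp only: distrib_left sum.distrib sum_distrib_right[symmetric] D1[of ?I] finite_atLeastAtMost mult_1)
  also have "(\<Sum>ls\<in>PiE ?I (\<lambda>_. S). Wt ?I ls * (\<integral>y. (pt y)\<^sup>2 / Dl ?I ls y \<partial>M))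
      = (\<integral>y. (\<Sum>ls\<in>PiE ?I (\<lambda>_. S). Wt ?I ls * ((pt y)\<^sup>2 / Dl ?I ls y)) \<partial>M)"
  proof -
    have "(\<integral>y. (\<Sum>ls\<in>PiE ?I (\<lambda>_. S). Wt ?I ls * ((pt y)\<^sup>2 / Dl ?I ls y)) \<partial>M)
       = (\<Sum>ls\<in>PiE ?I (\<lambda>_. S). \<integral>y. Wt ?I ls * ((pt y)\<^sup>2 / Dl ?I ls y) \<partial>M)"
    proof (rule Bochner_Integration.integral_sum)
      fix ls assume ls: "ls \<in> PiE ?I (\<lambda>_. S)"
      show "integrable M (\<lambda>y. Wt ?I ls * ((pt y)\<^sup>2 / Dl ?I ls y))"
        by (intro integrable_mult_right INT2[OF p2 Dl_meas[OF ls]]) (rule Dl_ge[OF N ls])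
    qed
    then show ?thesis by (simp only: integral_mult_right_zero)
  qed
  also have "(\<integral>y. (\<Sum>ls\<in>PiE ?I (\<lambda>_. S). Wt ?I ls * ((pt y)\<^sup>2 / Dl ?I ls y)) \<partial>M)
      \<le> (\<integral>y. (pt y)\<^sup>2 / (real N * mix y) + C * (pt y)\<^sup>2 \<partial>M)"
  proof (rule integral_mono)
    show "integrable M (\<lambda>y. \<Sum>ls\<in>PiE ?I (\<lambda>_. S). Wt ?I ls * ((pt y)\<^sup>2 / Dl ?I ls y))"
    proof (rule Bochner_Integration.integrable_sum)
      fix ls assume ls: "ls \<in> PiE ?I (\<lambda>_. S)"
      show "integrable M (\<lambda>y. Wt ?I ls * ((pt y)\<^sup>2 / Dl ?I ls y))"
        by (intro integrable_mult_right INT2[OF p2 Dl_meas[OF ls]]) (rule Dl_ge[OF N ls])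
    qed
    show "integrable M (\<lambda>y. (pt y)\<^sup>2 / (real N * mix y) + C * (pt y)\<^sup>2)"
      by (intro Bochner_Integration.integrable_add integrable_mult_right INT2[OF p2 Nmix_meas] p2) (rule Nmix_ge[OF N])
  next
    fix y assume y: "y \<in> space M"
    have "(\<Sum>ls\<in>PiE ?I (\<lambda>_. S). Wt ?I ls * ((pt y)\<^sup>2 / Dl ?I ls y)) = (pt y)\<^sup>2 * (\<Sum>ls\<in>PiE ?I (\<lambda>_. S). Wt ?I ls / Dl ?I ls y)"
      by (simp add: sum_distrib_left mult.commute)
    also have "\<dots> \<le> (pt y)\<^sup>2 * (1 / (real N * mix y) + C)"
      using PW[of ?I y] y N by (intro mult_left_mono) (auto simp: C_def)
    also have "\<dots> = (pt y)\<^sup>2 / (real N * mix y) + C * (pt y)\<^sup>2" by (simp add: algebra_simps)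
    finally show "(\<Sum>ls\<in>PiE ?I (\<lambda>_. S). Wt ?I ls * ((pt y)\<^sup>2 / Dl ?I ls y)) \<le> (pt y)\<^sup>2 / (real N * mix y) + C * (pt y)\<^sup>2" .
  qed
  also have "(\<integral>y. (pt y)\<^sup>2 / (real N * mix y) + C * (pt y)\<^sup>2 \<partial>M) = (\<integral>y. (pt y)\<^sup>2 / (real N * mix y) \<partial>M) + C * (\<integral>y. (pt y)\<^sup>2 \<partial>M)"
  proof -
    have "integrable M (\<lambda>y. (pt y)\<^sup>2 / (real N * mix y))" by (rule INT2[OF p2 Nmix_meas]) (rule Nmix_ge[OF N])
    then show ?thesis using p2 by (simp add: Bochner_Integration.integral_add)
  qed
  finally have bnd: "(\<Sum>ls\<in>PiE ?I (\<lambda>_. S). Wt ?I ls * TT ls) \<le> (\<integral>y. (pt y)\<^sup>2 / (real N * mix y) \<partial>M) + C * (\<integral>y. (pt y)\<^sup>2 \<partial>M) + (Z\<^sup>2 - Z\<^sup>2 / real N)"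
    by simp
  show ?thesis
  proof (rule exI[of _ "\<Sum>ls\<in>PiE ?I (\<lambda>_. S). Wt ?I ls * TT ls"], intro conjI)
    show "0 \<le> (\<Sum>ls\<in>PiE ?I (\<lambda>_. S). Wt ?I ls * TT ls)"
      by (rule sum_nonneg) (use W0 TT0 in simp)
  qed (use eq bnd in \<open>simp_all add: Z_def C_def\<close>)
qed

lemma SUMC:
  assumes N: "1 \<le> N"
  shows "(\<Sum>s\<in>S. \<alpha> s * (\<integral>y. q s y * (pt y / (real N * mix y)) \<partial>M)) = (\<integral>x. pt x \<partial>M) / real N"
proof -
  have int: "integrable M (\<lambda>y. \<alpha> s * (q s y * (pt y / (real N * mix y))))" if s: "s \<in> S" for s
  proof (rule integrable_mult_right)
    show "integrable M (\<lambda>y. q s y * (pt y / (real N * mix y)))"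
      by (rule GOODU(3)[OF Nmix_meas _ s]) (rule Nmix_ge[OF N])
  qed
  have "(\<integral>y. (\<Sum>s\<in>S. \<alpha> s * (q s y * (pt y / (real N * mix y)))) \<partial>M) = (\<Sum>s\<in>S. \<integral>y. \<alpha> s * (q s y * (pt y / (real N * mix y))) \<partial>M)"
    by (rule Bochner_Integration.integral_sum) (rule int)
  also have "\<dots> = (\<Sum>s\<in>S. \<alpha> s * (\<integral>y. q s y * (pt y / (real N * mix y)) \<partial>M))"
    by (simp only: integral_mult_right_zero)
  finally have 1: "(\<Sum>s\<in>S. \<alpha> s * (\<integral>y. q s y * (pt y / (real N * mix y)) \<partial>M)) = (\<integral>y. (\<Sum>s\<in>S. \<alpha> s * (q s y * (pt y / (real N * mix y)))) \<partial>M)"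
    by (rule sym)
  have 2: "(\<integral>y. (\<Sum>s\<in>S. \<alpha> s * (q s y * (pt y / (real N * mix y)))) \<partial>M) = (\<integral>y. pt y / real N \<partial>M)"
  proof (rule Bochner_Integration.integral_cong[OF refl])
    fix y assume y: "y \<in> space M"
    have pos: "0 < mix y" using mix_lo[OF y] Cm_pos by linarith
    have "(\<Sum>s\<in>S. \<alpha> s * (q s y * (pt y / (real N * mix y)))) = (\<Sum>s\<in>S. \<alpha> s * q s y) * (pt y / (real N * mix y))"
      by (simp only: sum_distrib_right mult.assoc)
    also have "\<dots> = mix y * (pt y / (real N * mix y))" by (simp only: mix_def)
    also have "\<dots> = pt y / real N" using pos N by simp
    finally show "(\<Sum>s\<in>S. \<alpha> s * (q s y * (pt y / (real N * mix y)))) = pt y / real N" .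
  qed
  show ?thesis unfolding 1 2 by (simp only: integral_divide_zero)
qed

lemma SUMD:
  assumes N: "1 \<le> N" and p2: "integrable M (\<lambda>y. (pt y)\<^sup>2)"
  shows "(\<Sum>s\<in>S. \<alpha> s * (\<integral>y. q s y * (pt y / (real N * mix y))\<^sup>2 \<partial>M)) = (\<integral>y. (pt y)\<^sup>2 / (real N * mix y) \<partial>M) / real N"
proof -
  have int: "integrable M (\<lambda>y. \<alpha> s * (q s y * (pt y / (real N * mix y))\<^sup>2))" if s: "s \<in> S" for s
  proof (rule integrable_mult_right)
    show "integrable M (\<lambda>y. q s y * (pt y / (real N * mix y))\<^sup>2)"
      by (rule GOODU(4)[OF Nmix_meas _ s p2]) (rule Nmix_ge[OF N])
  qed
  have "(\<integral>y. (\<Sum>s\<in>S. \<alpha> s * (q s y * (pt y / (real N * mix y))\<^sup>2)) \<partial>M) = (\<Sum>s\<in>S. \<integral>y. \<alpha> s * (q s y * (pt y / (real N * mix y))\<^sup>2) \<partial>M)"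
    by (rule Bochner_Integration.integral_sum) (rule int)
  also have "\<dots> = (\<Sum>s\<in>S. \<alpha> s * (\<integral>y. q s y * (pt y / (real N * mix y))\<^sup>2 \<partial>M))"
    by (simp only: integral_mult_right_zero)
  finally have 1: "(\<Sum>s\<in>S. \<alpha> s * (\<integral>y. q s y * (pt y / (real N * mix y))\<^sup>2 \<partial>M)) = (\<integral>y. (\<Sum>s\<in>S. \<alpha> s * (q s y * (pt y / (real N * mix y))\<^sup>2)) \<partial>M)"
    by (rule sym)
  have 2: "(\<integral>y. (\<Sum>s\<in>S. \<alpha> s * (q s y * (pt y / (real N * mix y))\<^sup>2)) \<partial>M) = (\<integral>y. (pt y)\<^sup>2 / (real N * mix y) / real N \<partial>M)"
  proof (rule Bochner_Integration.integral_cong[OF refl])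
    fix y assume y: "y \<in> space M"
    have pos: "0 < mix y" using mix_lo[OF y] Cm_pos by linarith
    have "(\<Sum>s\<in>S. \<alpha> s * (q s y * (pt y / (real N * mix y))\<^sup>2)) = (\<Sum>s\<in>S. \<alpha> s * q s y) * (pt y / (real N * mix y))\<^sup>2"
      by (simp only: sum_distrib_right mult.assoc)
    also have "\<dots> = mix y * (pt y / (real N * mix y))\<^sup>2" by (simp only: mix_def)
    also have "\<dots> = (pt y)\<^sup>2 / (real N * mix y) / real N" using pos N by (simp add: power2_eq_square)
    finally show "(\<Sum>s\<in>S. \<alpha> s * (q s y * (pt y / (real N * mix y))\<^sup>2)) = (pt y)\<^sup>2 / (real N * mix y) / real N" .
  qed
  show ?thesis unfolding 1 2 by (simp only: integral_divide_zero)
qed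

lemma ER2:
  assumes N: "1 \<le> N" and p2: "integrable M (\<lambda>y. (pt y)\<^sup>2)"
  shows "(\<integral>\<^sup>+w. ennreal ((Z_RB pt q \<alpha> K N w)\<^sup>2) \<partial>PiM {1..N} (\<lambda>_. Q))
     = ennreal ((\<integral>x. pt x \<partial>M)\<^sup>2 - (\<integral>x. pt x \<partial>M)\<^sup>2 / real N + (\<integral>y. (pt y)\<^sup>2 / (real N * mix y) \<partial>M))"
proof -
  let ?I = "{1..N}"
  define Z where "Z = (\<integral>x. pt x \<partial>M)"
  define u where "u y = pt y / (real N * mix y)" for y
  define b where "b s = (\<integral>y. q s y * (u y)\<^sup>2 \<partial>M)" for s
  define c where "c s = (\<integral>y. q s y * u y \<partial>M)" for s
  define TT where "TT ls = (\<Sum>n\<in>?I. \<Sum>n'\<in>?I. if n = n' then b (ls n) else c (ls n) * c (ls n'))" for ls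
  have W0: "0 \<le> Wt ?I ls" if ls: "ls \<in> PiE ?I (\<lambda>_. S)" for ls
    using ls \<alpha>_nonneg by (auto simp: Wt_def intro!: prod_nonneg)
  have un: "0 \<le> u y" if y: "y \<in> space M" for y
    unfolding u_def by (rule u_nonneg[OF Nmix_ge[OF N] y])
  have TT0: "0 \<le> TT ls" if ls: "ls \<in> PiE ?I (\<lambda>_. S)" for ls
    unfolding TT_def
  proof (intro sum_nonneg)
    fix n n' assume n: "n \<in> ?I" and n': "n' \<in> ?I"
    have a: "0 \<le> c (ls m)" if "m \<in> ?I" for m
      unfolding c_def using q_nonneg[OF PiE_mem[OF ls that]] un by (intro integral_nonneg_AE AE_I2 mult_nonneg_nonneg) auto
    have bb: "0 \<le> b (ls n)"
      unfolding b_def using q_nonneg[OF PiE_mem[OF ls n]] by (intro integral_nonneg_AE AE_I2 mult_nonneg_nonneg) auto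
    show "0 \<le> (if n = n' then b (ls n) else c (ls n) * c (ls n'))"
      using a[OF n] a[OF n'] bb by auto
  qed
  have um: "u \<in> borel_measurable M"
    unfolding u_def[abs_def] by (rule GOODU(1)[OF Nmix_meas _ K1]) (rule Nmix_ge[OF N])
  have "(\<integral>\<^sup>+w. ennreal ((Z_RB pt q \<alpha> K N w)\<^sup>2) \<partial>PiM ?I (\<lambda>_. Q))
     = (\<Sum>ls\<in>PiE ?I (\<lambda>_. S). \<integral>\<^sup>+x. (\<Prod>n\<in>?I. fd (x n, ls n)) * ennreal ((Z_RB pt q \<alpha> K N (\<lambda>n\<in>?I. (x n, ls n)))\<^sup>2) \<partial>PiM ?I (\<lambda>_. M))"
    by (rule LAB) (use ennreal_RB_meas[of "\<lambda>x. x\<^sup>2"] in simp_all)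
  also have "\<dots> = (\<Sum>ls\<in>PiE ?I (\<lambda>_. S). ennreal (Wt ?I ls * TT ls))"
  proof (rule sum.cong[OF refl])
    fix ls assume ls: "ls \<in> PiE ?I (\<lambda>_. S)"
    have r: "Z_RB pt q \<alpha> K N (\<lambda>n\<in>?I. (x n, ls n)) = (\<Sum>n\<in>?I. u (x n))" for x
      by (simp only: R2 u_def)
    show "(\<integral>\<^sup>+x. (\<Prod>n\<in>?I. fd (x n, ls n)) * ennreal ((Z_RB pt q \<alpha> K N (\<lambda>n\<in>?I. (x n, ls n)))\<^sup>2) \<partial>PiM ?I (\<lambda>_. M))
        = ennreal (Wt ?I ls * TT ls)"
      unfolding r TT_def b_def c_def
    proof (rule GEN2[OF _ ls um])
      fix y assume "y \<in> space M" then show "0 \<le> u y" by (rule un)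
    next
      fix s assume s: "s \<in> S"
      show "integrable M (\<lambda>y. q s y * u y)"
        unfolding u_def by (rule GOODU(3)[OF Nmix_meas _ s]) (rule Nmix_ge[OF N])
      show "integrable M (\<lambda>y. q s y * (u y)\<^sup>2)"
        unfolding u_def by (rule GOODU(4)[OF Nmix_meas _ s p2]) (rule Nmix_ge[OF N])
    qed simp
  qed
  also have "\<dots> = ennreal (\<Sum>ls\<in>PiE ?I (\<lambda>_. S). Wt ?I ls * TT ls)"
    by (rule sum_ennreal) (use W0 TT0 in simp)
  also have "(\<Sum>ls\<in>PiE ?I (\<lambda>_. S). Wt ?I ls * TT ls)
     = (\<Sum>n\<in>?I. \<Sum>n'\<in>?I. \<Sum>ls\<in>PiE ?I (\<lambda>_. S). Wt ?I ls * (if n = n' then b (ls n) else c (ls n) * c (ls n')))"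
  proof -
    have "(\<Sum>ls\<in>PiE ?I (\<lambda>_. S). Wt ?I ls * TT ls)
       = (\<Sum>ls\<in>PiE ?I (\<lambda>_. S). \<Sum>n\<in>?I. \<Sum>n'\<in>?I. Wt ?I ls * (if n = n' then b (ls n) else c (ls n) * c (ls n')))"
      unfolding TT_def by (simp only: sum_distrib_left)
    also have "\<dots> = (\<Sum>n\<in>?I. \<Sum>n'\<in>?I. \<Sum>ls\<in>PiE ?I (\<lambda>_. S). Wt ?I ls * (if n = n' then b (ls n) else c (ls n) * c (ls n')))"
      by (subst sum.swap, rule sum.cong[OF refl], rule sum.swap)
    finally show ?thesis .
  qed
  also have "\<dots> = (\<Sum>n\<in>?I. \<Sum>n'\<in>?I. if n = n' then (\<Sum>s\<in>S. \<alpha> s * b s) else (\<Sum>s\<in>S. \<alpha> s * c s) * (\<Sum>s\<in>S. \<alpha> s * c s))"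
  proof (rule sum.cong[OF refl], rule sum.cong[OF refl])
    fix n n' assume n: "n \<in> ?I" and n': "n' \<in> ?I"
    show "(\<Sum>ls\<in>PiE ?I (\<lambda>_. S). Wt ?I ls * (if n = n' then b (ls n) else c (ls n) * c (ls n')))
      = (if n = n' then (\<Sum>s\<in>S. \<alpha> s * b s) else (\<Sum>s\<in>S. \<alpha> s * c s) * (\<Sum>s\<in>S. \<alpha> s * c s))"
    proof (cases "n = n'")
      case True then show ?thesis using D2[OF _ n, of b] by simp
    next
      case False then show ?thesis using D3[OF _ n n' False, of c c] by simp
    qed
  qed
  also have "\<dots> = real N * (\<Sum>s\<in>S. \<alpha> s * b s) + (real N * real N - real N) * ((\<Sum>s\<in>S. \<alpha> s * c s) * (\<Sum>s\<in>S. \<alpha> s * c s))"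
    using ALG2[of ?I] by simp
  also have "(\<Sum>s\<in>S. \<alpha> s * c s) = Z / real N" unfolding c_def u_def Z_def by (rule SUMC[OF N])
  also have "(\<Sum>s\<in>S. \<alpha> s * b s) = (\<integral>y. (pt y)\<^sup>2 / (real N * mix y) \<partial>M) / real N" unfolding b_def u_def by (rule SUMD[OF N p2])
  also have "real N * ((\<integral>y. (pt y)\<^sup>2 / (real N * mix y) \<partial>M) / real N) + (real N * real N - real N) * (Z / real N * (Z / real N))
      = Z\<^sup>2 - Z\<^sup>2 / real N + (\<integral>y. (pt y)\<^sup>2 / (real N * mix y) \<partial>M)"
    using N by (simp add: field_simps power2_eq_square)
  finally show ?thesis by (simp only: Z_def)
qed

lemma space_P: "w \<in> space (PiM I (\<lambda>_. Q)) \<Longrightarrow> n \<in> I \<Longrightarrow> fst (w n) \<in> space M \<and> snd (w n) \<in> S"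
  by (auto simp: space_PiM space_Q space_pair_measure PiE_def Pi_def)

lemma BHlow:
  assumes N: "1 \<le> N" and w: "w \<in> space (PiM {1..N} (\<lambda>_. Q))"
  shows "pt (fst (w 1)) / (real N * Cp) \<le> Z_BH pt q N w"
proof -
  let ?I = "{1..N}"
  define D where "D n = (\<Sum>m\<in>?I. q (snd (w m)) (fst (w n)))" for n
  have Dhi: "D n \<le> real N * Cp" if n: "n \<in> ?I" for n
  proof -
    have "D n \<le> (\<Sum>m\<in>?I. Cp)" unfolding D_def
      using space_P[OF w] n q_hi by (intro sum_mono) auto
    then show ?thesis by simp
  qed
  have Dlo: "real N * Cm \<le> D n" if n: "n \<in> ?I" for n
  proof -
    have "(\<Sum>m\<in>?I. Cm) \<le> D n" unfolding D_def
      using space_P[OF w] n q_lo by (intro sum_mono) auto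
    then show ?thesis by simp
  qed
  have NC: "0 < real N * Cm" using N Cm_pos by simp
  have Dpos: "0 < D n" if "n \<in> ?I" for n
    using Dlo[OF that] NC by linarith
  have t0: "0 \<le> pt (fst (w n)) / D n" if "n \<in> ?I" for n
    using pt_nonneg space_P[OF w that] Dpos[OF that] by simp
  have 1: "1 \<in> ?I" using N by simp
  have "pt (fst (w 1)) / (real N * Cp) \<le> pt (fst (w 1)) / D 1"
    using pt_nonneg space_P[OF w 1] Dpos[OF 1] Dhi[OF 1] by (intro divide_left_mono) auto
  also have "\<dots> \<le> (\<Sum>n\<in>?I. pt (fst (w n)) / D n)"
    by (rule member_le_sum[OF 1]) (use t0 in auto)
  finally show ?thesis by (simp add: Z_BH_def D_def)
qed

lemma RBlow:
  assumes N: "1 \<le> N" and w: "w \<in> space (PiM {1..N} (\<lambda>_. Q))"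
  shows "pt (fst (w 1)) / (real N * Cp) \<le> Z_RB pt q \<alpha> K N w"
proof -
  let ?I = "{1..N}"
  have 1: "1 \<in> ?I" using N by simp
  have mpos: "0 < mix (fst (w n))" if "n \<in> ?I" for n
    using mix_lo[of "fst (w n)"] space_P[OF w that] Cm_pos by force
  have t0: "0 \<le> pt (fst (w n)) / mix (fst (w n))" if "n \<in> ?I" for n
    using pt_nonneg space_P[OF w that] mpos[OF that] by simp
  have "pt (fst (w 1)) / Cp \<le> pt (fst (w 1)) / mix (fst (w 1))"
    using pt_nonneg space_P[OF w 1] mpos[OF 1] mix_hi[of "fst (w 1)"] by (intro divide_left_mono) auto
  also have "\<dots> \<le> (\<Sum>n\<in>?I. pt (fst (w n)) / mix (fst (w n)))"
    by (rule member_le_sum[OF 1]) (use t0 in auto)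
  finally have "pt (fst (w 1)) / Cp / real N \<le> (\<Sum>n\<in>?I. pt (fst (w n)) / mix (fst (w n))) / real N"
    using N by (intro divide_right_mono) auto
  then show ?thesis by (simp add: Z_RB_def mix_def mult.commute)
qed

lemma MARG:
  assumes i: "i \<in> I" and h: "h \<in> borel_measurable Q"
  shows "(\<integral>\<^sup>+w. h (w i) \<partial>PiM I (\<lambda>_. Q)) = (\<integral>\<^sup>+y. h y \<partial>Q)"
proof -
  have "distr (PiM I (\<lambda>_. Q)) Q (\<lambda>w. w i) = Q"
    by (rule distr_PiM_component[OF prob_Q i])
  then have "(\<integral>\<^sup>+y. h y \<partial>Q) = (\<integral>\<^sup>+y. h y \<partial>distr (PiM I (\<lambda>_. Q)) Q (\<lambda>w. w i))" by simp
  also have "\<dots> = (\<integral>\<^sup>+w. h (w i) \<partial>PiM I (\<lambda>_. Q))"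
  proof (rule nn_integral_distr)
    show "(\<lambda>w. w i) \<in> measurable (PiM I (\<lambda>_. Q)) Q" by (rule measurable_component_singleton[OF i])
    show "h \<in> borel_measurable (distr (PiM I (\<lambda>_. Q)) Q (\<lambda>w. w i))" using h by simp
  qed
  finally show ?thesis by simp
qed

lemma INF:
  fixes N :: nat
  assumes N: "1 \<le> N" and A: "\<not> integrable M (\<lambda>y. (pt y)\<^sup>2)"
    and Gm: "G \<in> borel_measurable (PiM {1..N} (\<lambda>_. Q))" and c: "0 < c"
    and Gb: "\<And>w. w \<in> space (PiM {1..N} (\<lambda>_. Q)) \<Longrightarrow> ennreal (c * (pt (fst (w 1)))\<^sup>2) \<le> G w"
  shows "(\<integral>\<^sup>+w. G w \<partial>PiM {1..N} (\<lambda>_. Q)) = \<infinity>"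
proof -
  let ?I = "{1..N}"
  have inf: "(\<integral>\<^sup>+y. ennreal ((pt y)\<^sup>2) \<partial>M) = \<infinity>"
  proof (rule ccontr)
    assume "(\<integral>\<^sup>+y. ennreal ((pt y)\<^sup>2) \<partial>M) \<noteq> \<infinity>"
    then have "integrable M (\<lambda>y. (pt y)\<^sup>2)"
      by (intro integrableI_nonneg) (auto simp: top.not_eq_extremum)
    with A show False by simp
  qed
  obtain s0 where s0: "s0 \<in> S" "0 < \<alpha> s0"
  proof -
    have "\<exists>s\<in>S. 0 < \<alpha> s"
    proof (rule ccontr)
      assume "\<not> (\<exists>s\<in>S. 0 < \<alpha> s)"
      then have "\<forall>s\<in>S. \<alpha> s = 0" using \<alpha>_nonneg by force
      then show False using \<alpha>_sum by simp
    qed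
    then show ?thesis using that by blast
  qed
  have 1: "1 \<in> ?I" using N by simp
  have hm: "(\<lambda>y. ennreal (c * (pt (fst y))\<^sup>2)) \<in> borel_measurable Q"
    unfolding measurable_Q1 by measurable
  have "(\<integral>\<^sup>+w. ennreal (c * (pt (fst (w 1)))\<^sup>2) \<partial>PiM ?I (\<lambda>_. Q)) \<le> (\<integral>\<^sup>+w. G w \<partial>PiM ?I (\<lambda>_. Q))"
    by (intro nn_integral_mono Gb)
  moreover have "(\<integral>\<^sup>+w. ennreal (c * (pt (fst (w 1)))\<^sup>2) \<partial>PiM ?I (\<lambda>_. Q)) = (\<integral>\<^sup>+y. ennreal (c * (pt (fst y))\<^sup>2) \<partial>Q)"
    by (rule MARG[OF 1 hm])
  moreover have "(\<integral>\<^sup>+y. ennreal (c * (pt (fst y))\<^sup>2) \<partial>Q) = (\<Sum>l\<in>S. \<integral>\<^sup>+x. ennreal (\<alpha> l * q l x) * ennreal (c * (pt x)\<^sup>2) \<partial>M)"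
    by (subst PL) (use hm in \<open>simp_all add: measurable_Q1\<close>)
  moreover have "(\<integral>\<^sup>+x. ennreal (\<alpha> s0 * q s0 x) * ennreal (c * (pt x)\<^sup>2) \<partial>M) \<le> (\<Sum>l\<in>S. \<integral>\<^sup>+x. ennreal (\<alpha> l * q l x) * ennreal (c * (pt x)\<^sup>2) \<partial>M)"
    by (rule member_le_sum[OF s0(1)]) auto
  moreover have "(\<integral>\<^sup>+x. ennreal (\<alpha> s0 * Cm * c) * ennreal ((pt x)\<^sup>2) \<partial>M) \<le> (\<integral>\<^sup>+x. ennreal (\<alpha> s0 * q s0 x) * ennreal (c * (pt x)\<^sup>2) \<partial>M)"
  proof (rule nn_integral_mono)
    fix x assume x: "x \<in> space M"
    have k0: "0 \<le> \<alpha> s0 * c * (pt x)\<^sup>2" using s0(2) c by simp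
    have "(\<alpha> s0 * c * (pt x)\<^sup>2) * Cm \<le> (\<alpha> s0 * c * (pt x)\<^sup>2) * q s0 x"
      by (rule mult_left_mono[OF q_lo[OF s0(1) x] k0])
    then have le: "\<alpha> s0 * Cm * c * (pt x)\<^sup>2 \<le> \<alpha> s0 * q s0 x * (c * (pt x)\<^sup>2)"
      by (simp only: mult_ac)
    have l: "ennreal (\<alpha> s0 * Cm * c) * ennreal ((pt x)\<^sup>2) = ennreal (\<alpha> s0 * Cm * c * (pt x)\<^sup>2)"
      by (rule ennreal_mult'[symmetric]) (use s0(2) c Cm_pos in simp)
    have r: "ennreal (\<alpha> s0 * q s0 x) * ennreal (c * (pt x)\<^sup>2) = ennreal (\<alpha> s0 * q s0 x * (c * (pt x)\<^sup>2))"
      by (rule ennreal_mult'[symmetric]) (use s0(2) q_nonneg[OF s0(1) x] in simp)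
    show "ennreal (\<alpha> s0 * Cm * c) * ennreal ((pt x)\<^sup>2) \<le> ennreal (\<alpha> s0 * q s0 x) * ennreal (c * (pt x)\<^sup>2)"
      unfolding l r by (rule ennreal_leI[OF le])
  qed
  moreover have "(\<integral>\<^sup>+x. ennreal (\<alpha> s0 * Cm * c) * ennreal ((pt x)\<^sup>2) \<partial>M) = \<infinity>"
  proof -
    have "(\<integral>\<^sup>+x. ennreal (\<alpha> s0 * Cm * c) * ennreal ((pt x)\<^sup>2) \<partial>M) = ennreal (\<alpha> s0 * Cm * c) * (\<integral>\<^sup>+x. ennreal ((pt x)\<^sup>2) \<partial>M)"
      by (rule nn_integral_cmult) simp
    also have "\<dots> = \<infinity>" unfolding inf
      using s0(2) c Cm_pos by (simp add: ennreal_mult_top)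
    finally show ?thesis .
  qed
  ultimately have "\<infinity> \<le> (\<integral>\<^sup>+w. G w \<partial>PiM {1..N} (\<lambda>_. Q))"
    by (simp only:)
  then show ?thesis by (simp add: top_unique)
qed

end




theorem theorem1:
  fixes M :: "'a measure" and pt :: "'a \<Rightarrow> real" and q :: "nat \<Rightarrow> 'a \<Rightarrow> real"
    and \<alpha> :: "nat \<Rightarrow> real" and K :: nat and Cm Cp :: real
  assumes pt_meas: "pt \<in> borel_measurable M"
    and pt_nonneg: "\<forall>x\<in>space M. 0 \<le> pt x"
    and pt_int: "integrable M pt"
    and Z_pos: "0 < (\<integral>x. pt x \<partial>M)"
    and q_dens: "\<forall>k\<in>{1..K}. q k \<in> borel_measurable M \<and> integrable M (q k) \<and> (\<integral>x. q k x \<partial>M) = 1"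
    and Cm_pos: "0 < Cm" and Cp_pos: "0 < Cp"
    and q_bounds: "\<forall>k\<in>{1..K}. \<forall>x\<in>space M. Cm \<le> q k x \<and> q k x \<le> Cp"
    and \<alpha>_nonneg: "\<forall>k\<in>{1..K}. 0 \<le> \<alpha> k"
    and \<alpha>_sum: "(\<Sum>k\<in>{1..K}. \<alpha> k) = 1"
  shows "\<exists>Cl>0. \<exists>Cu>0. \<forall>N::nat. N \<ge> 1 \<longrightarrow>
           (let Z = (\<integral>x. pt x \<partial>M); P = sample_law M q \<alpha> K N;
                d = variance_of P (\<lambda>\<omega>. Z_BH pt q N \<omega> / Z) - variance_of P (\<lambda>\<omega>. Z_RB pt q \<alpha> K N \<omega> / Z)
            in - Cl / real N \<le> d \<and> d \<le> Cu / (real N)\<^sup>2)"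
proof -
  interpret S: setting M pt q \<alpha> K Cm Cp
    by (rule setting.intro; fact)
  define Z where "Z = (\<integral>x. pt x \<partial>M)"
  define A2 where "A2 = (\<integral>y. (pt y)\<^sup>2 \<partial>M)"
  define Cl where "Cl = A2 / (Cm * Z\<^sup>2) + 1"
  define Cu where "Cu = Cp\<^sup>2 * A2 / (Cm^3 * Z\<^sup>2) + 1"
  have Z0: "0 < Z" using Z_pos by (simp add: Z_def)
  have A20: "0 \<le> A2" unfolding A2_def by (rule integral_nonneg_AE) simp
  have Clp: "0 < Cl" unfolding Cl_def using A20 Cm_pos Z0 by (simp add: add_nonneg_pos)
  have Cup: "0 < Cu" unfolding Cu_def using A20 Cm_pos Z0 by (simp add: add_nonneg_pos)
  have main: "- Cl / real N \<le> variance_of (PiM {1..N} (\<lambda>_. pair_law M q \<alpha> K)) (\<lambda>w. Z_BH pt q N w / Z)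
       - variance_of (PiM {1..N} (\<lambda>_. pair_law M q \<alpha> K)) (\<lambda>w. Z_RB pt q \<alpha> K N w / Z) \<and>
     variance_of (PiM {1..N} (\<lambda>_. pair_law M q \<alpha> K)) (\<lambda>w. Z_BH pt q N w / Z)
       - variance_of (PiM {1..N} (\<lambda>_. pair_law M q \<alpha> K)) (\<lambda>w. Z_RB pt q \<alpha> K N w / Z) \<le> Cu / (real N)\<^sup>2"
    if N: "1 \<le> N" for N :: nat
  proof -
    let ?P = "PiM {1..N} (\<lambda>_. pair_law M q \<alpha> K)"
    have PP: "prob_space ?P" by (rule prob_space_PiM) (rule S.prob_Q)
    have BHm: "Z_BH pt q N \<in> borel_measurable ?P" by (rule S.BH_meas)
    have RBm: "Z_RB pt q \<alpha> K N \<in> borel_measurable ?P" by (rule S.RB_meas)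
    have BHn: "0 \<le> Z_BH pt q N w" if "w \<in> space ?P" for w
    proof -
      have 1: "1 \<in> {1..N}" using N by simp
      have a: "0 \<le> pt (fst (w 1)) / (real N * Cp)"
        using pt_nonneg S.space_P[OF that 1] N Cp_pos by simp
      show ?thesis using order.trans[OF a S.BHlow[OF N that]] .
    qed
    have RBn: "0 \<le> Z_RB pt q \<alpha> K N w" if "w \<in> space ?P" for w
    proof -
      have 1: "1 \<in> {1..N}" using N by simp
      have a: "0 \<le> pt (fst (w 1)) / (real N * Cp)"
        using pt_nonneg S.space_P[OF that 1] N Cp_pos by simp
      show ?thesis using order.trans[OF a S.RBlow[OF N that]] .
    qed
    have vB0: "0 \<le> variance_of ?P (\<lambda>w. Z_BH pt q N w / Z)" by (rule var_nonneg)
    have vR0: "0 \<le> variance_of ?P (\<lambda>w. Z_RB pt q \<alpha> K N w / Z)" by (rule var_nonneg)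
    show ?thesis
    proof (cases "integrable M (\<lambda>y. (pt y)\<^sup>2)")
      case p2: True
      obtain VB where VB: "(\<integral>\<^sup>+w. ennreal ((Z_BH pt q N w)\<^sup>2) \<partial>?P) = ennreal VB" "0 \<le> VB"
        "VB \<le> Z\<^sup>2 - Z\<^sup>2 / real N + (\<integral>y. (pt y)\<^sup>2 / (real N * S.mix y) \<partial>M) + Cp\<^sup>2 / (Cm^3 * (real N)\<^sup>2) * A2"
        using S.EB2[OF N p2] unfolding Z_def A2_def by blast
      define X where "X = (\<integral>y. (pt y)\<^sup>2 / (real N * S.mix y) \<partial>M)"
      have X0: "0 \<le> X" unfolding X_def
      proof (rule integral_nonneg_AE, rule AE_I2)
        fix x assume x: "x \<in> space M"
        have "0 < real N * S.mix x" using S.Nmix_ge[OF N x] Cm_pos by linarith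
        then show "0 \<le> (pt x)\<^sup>2 / (real N * S.mix x)" by simp
      qed
      have ZN: "Z\<^sup>2 / real N \<le> Z\<^sup>2"
      proof -
        have "Z\<^sup>2 * 1 \<le> Z\<^sup>2 * real N" using N by (intro mult_left_mono) auto
        then show ?thesis using N by (simp add: divide_le_eq)
      qed
      have R: "(\<integral>\<^sup>+w. ennreal ((Z_RB pt q \<alpha> K N w)\<^sup>2) \<partial>?P) = ennreal (Z\<^sup>2 - Z\<^sup>2 / real N + X)"
        using S.ER2[OF N p2] unfolding Z_def X_def .
      have vB: "variance_of ?P (\<lambda>w. Z_BH pt q N w / Z) = (VB - Z\<^sup>2) / Z\<^sup>2"
        by (rule VAR_fin[OF PP BHm BHn _ VB(1) _ VB(2) Z0]) (use S.EB1[OF N] Z0 in \<open>simp_all add: Z_def\<close>)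
      have vR: "variance_of ?P (\<lambda>w. Z_RB pt q \<alpha> K N w / Z) = (Z\<^sup>2 - Z\<^sup>2 / real N + X - Z\<^sup>2) / Z\<^sup>2"
        by (rule VAR_fin[OF PP RBm RBn _ R _ _ Z0]) (use S.ER1[OF N] Z0 ZN X0 in \<open>simp_all add: Z_def\<close>)
      have Xb: "X \<le> A2 / (Cm * real N)"
      proof -
        have "X \<le> (\<integral>y. (pt y)\<^sup>2 / (Cm * real N) \<partial>M)"
          unfolding X_def
        proof (rule integral_mono)
          show "integrable M (\<lambda>y. (pt y)\<^sup>2 / (real N * S.mix y))"
            by (rule S.INT2[OF p2 S.Nmix_meas]) (rule S.Nmix_ge[OF N])
          show "integrable M (\<lambda>y. (pt y)\<^sup>2 / (Cm * real N))" using p2 by simp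
        next
          fix y assume y: "y \<in> space M"
          have "real N * Cm \<le> real N * S.mix y" using S.mix_lo[OF y] by (intro mult_left_mono) auto
          then have "Cm * real N \<le> real N * S.mix y" by (simp only: mult.commute)
          moreover have "0 < Cm * real N" using Cm_pos N by simp
          ultimately show "(pt y)\<^sup>2 / (real N * S.mix y) \<le> (pt y)\<^sup>2 / (Cm * real N)"
            by (intro divide_left_mono) auto
        qed
        also have "\<dots> = A2 / (Cm * real N)" unfolding A2_def by simp
        finally show ?thesis .
      qed
      have lower: "- Cl / real N \<le> - variance_of ?P (\<lambda>w. Z_RB pt q \<alpha> K N w / Z)"
      proof -
        have "variance_of ?P (\<lambda>w. Z_RB pt q \<alpha> K N w / Z) = (X - Z\<^sup>2 / real N) / Z\<^sup>2"
        proof -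
          have "Z\<^sup>2 - Z\<^sup>2 / real N + X - Z\<^sup>2 = X - Z\<^sup>2 / real N" by simp
          then show ?thesis by (simp only: vR)
        qed
        also have "\<dots> \<le> X / Z\<^sup>2" using Z0 N by (intro divide_right_mono) auto
        also have "\<dots> \<le> (A2 / (Cm * real N)) / Z\<^sup>2" using Xb Z0 by (intro divide_right_mono) auto
        also have "\<dots> = (A2 / (Cm * Z\<^sup>2)) / real N" by (simp add: field_simps)
        also have "\<dots> \<le> Cl / real N" unfolding Cl_def using N by (intro divide_right_mono) auto
        finally show ?thesis by simp
      qed
      have upper: "(VB - Z\<^sup>2) / Z\<^sup>2 - (Z\<^sup>2 - Z\<^sup>2 / real N + X - Z\<^sup>2) / Z\<^sup>2 \<le> Cu / (real N)\<^sup>2"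
      proof -
        have "(VB - Z\<^sup>2) / Z\<^sup>2 - (Z\<^sup>2 - Z\<^sup>2 / real N + X - Z\<^sup>2) / Z\<^sup>2 = (VB - (Z\<^sup>2 - Z\<^sup>2 / real N + X)) / Z\<^sup>2"
        proof -
          have "(VB - Z\<^sup>2) - (Z\<^sup>2 - Z\<^sup>2 / real N + X - Z\<^sup>2) = VB - (Z\<^sup>2 - Z\<^sup>2 / real N + X)" by simp
          then show ?thesis by (simp only: diff_divide_distrib[symmetric])
        qed
        also have "\<dots> \<le> (Cp\<^sup>2 / (Cm^3 * (real N)\<^sup>2) * A2) / Z\<^sup>2"
          using VB(3) Z0 unfolding X_def by (intro divide_right_mono) auto
        also have "\<dots> = (Cp\<^sup>2 * A2 / (Cm^3 * Z\<^sup>2)) / (real N)\<^sup>2" by (simp add: field_simps)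
        also have "\<dots> \<le> Cu / (real N)\<^sup>2" unfolding Cu_def by (intro divide_right_mono) auto
        finally show ?thesis .
      qed
      show ?thesis using lower upper vB0 unfolding vB[symmetric] vR[symmetric] by linarith
    next
      case p2: False
      have c: "0 < 1 / (real N * Cp)\<^sup>2" using N Cp_pos by simp
      have B: "(\<integral>\<^sup>+w. ennreal ((Z_BH pt q N w)\<^sup>2) \<partial>?P) = \<infinity>"
      proof (rule S.INF[OF N p2 _ c])
        show "(\<lambda>w. ennreal ((Z_BH pt q N w)\<^sup>2)) \<in> borel_measurable ?P"
          using S.ennreal_BH_meas[of "\<lambda>x. x\<^sup>2" N] by simp
      next
        fix w assume w: "w \<in> space ?P"
        have 1: "1 \<in> {1..N}" using N by simp
        have a: "0 \<le> pt (fst (w 1)) / (real N * Cp)"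
          using pt_nonneg S.space_P[OF w 1] N Cp_pos by simp
        have "(pt (fst (w 1)) / (real N * Cp))\<^sup>2 \<le> (Z_BH pt q N w)\<^sup>2"
          by (rule power_mono[OF S.BHlow[OF N w] a])
        then show "ennreal (1 / (real N * Cp)\<^sup>2 * (pt (fst (w 1)))\<^sup>2) \<le> ennreal ((Z_BH pt q N w)\<^sup>2)"
          by (intro ennreal_leI) (simp add: power_divide)
      qed
      have R: "(\<integral>\<^sup>+w. ennreal ((Z_RB pt q \<alpha> K N w)\<^sup>2) \<partial>?P) = \<infinity>"
      proof (rule S.INF[OF N p2 _ c])
        show "(\<lambda>w. ennreal ((Z_RB pt q \<alpha> K N w)\<^sup>2)) \<in> borel_measurable ?P"
          using S.ennreal_RB_meas[of "\<lambda>x. x\<^sup>2" N] by simp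
      next
        fix w assume w: "w \<in> space ?P"
        have 1: "1 \<in> {1..N}" using N by simp
        have a: "0 \<le> pt (fst (w 1)) / (real N * Cp)"
          using pt_nonneg S.space_P[OF w 1] N Cp_pos by simp
        have "(pt (fst (w 1)) / (real N * Cp))\<^sup>2 \<le> (Z_RB pt q \<alpha> K N w)\<^sup>2"
          by (rule power_mono[OF S.RBlow[OF N w] a])
        then show "ennreal (1 / (real N * Cp)\<^sup>2 * (pt (fst (w 1)))\<^sup>2) \<le> ennreal ((Z_RB pt q \<alpha> K N w)\<^sup>2)"
          by (intro ennreal_leI) (simp add: power_divide)
      qed
      have vB: "variance_of ?P (\<lambda>w. Z_BH pt q N w / Z) = 0" by (rule VAR_inf[OF PP BHm B Z0])
      have vR: "variance_of ?P (\<lambda>w. Z_RB pt q \<alpha> K N w / Z) = 0" by (rule VAR_inf[OF PP RBm R Z0])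
      show ?thesis unfolding vB vR using Clp Cup N by simp
    qed
  qed
  show ?thesis
    unfolding Let_def sample_law_def Z_def[symmetric]
    using Clp Cup main by blast
qed


end
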